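(* Let $P=(L_1,\dots,L_7)$ be a heptagon with smooth adjoint quartic $C$ and associated theta characteristic $\eta$. Then the following linear equivalences of divisors on $C$ hold: \begin{align*} \eta+p_{13}-p_{46} &\sim p_{47}+p_{57}, & \eta+p_{46}-p_{13} &\sim p_{37}+p_{27},\\ \eta+p_{46}-p_{27} &\sim p_{37}+p_{13}, & \eta+p_{27}-p_{46} &\sim p_{36}+p_{35},\\ \eta+p_{27}-p_{35} &\sim p_{36}+p_{46}, & \eta+p_{35}-p_{27} &\sim p_{26}+p_{16},\\ \eta+p_{35}-p_{16} &\sim p_{26}+p_{27}, & \eta+p_{16}-p_{35} &\sim p_{25}+p_{24},\\ \eta+p_{16}-p_{24} &\sim p_{25}+p_{35}, & \eta+p_{24}-p_{16} &\sim p_{15}+p_{57},\\ \eta+p_{24}-p_{57} &\sim p_{15}+p_{16}, & \eta+p_{57}-p_{24} &\sim p_{14}+p_{13},\\ \eta+p_{57}-p_{13} &\sim p_{14}+p_{24}, & \eta+p_{13}-p_{57} &\sim p_{47}+p_{46}. \end{align*}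
   Context: Work over $\mathbb{C}$. A heptagon is an ordered $7$-tuple $(L_1,\dots,L_7)$ of distinct lines in $\mathbb{P}^2$, no three passing through a common point. Write $p_{ij}=L_i\cap L_j$. The residual arrangement $\mathcal{R}(P)$ is the set of the $14$ points $p_{ij}$ with $i,j$ not consecutive modulo $7$; the adjoint quartic is the unique plane quartic $C$ through $\mathcal{R}(P)$. If $C$ is smooth, the associated theta characteristic is $\eta:=\sum_{p\in\mathcal{R}(P)}p-3H$ (a divisor class on $C$ with $2\eta\sim H$), where $H$ is the class of a line. *)

theory Defs
  imports "HOL-Complex_Analysis.Complex_Analysis"
begin

text \<open>Vectors in C^3 (homogeneous coordinates of points of P^2, or coefficient
vectors of lines).\<close>
type_synonym cvec = "complex \<times> complex \<times> complex"

definition c1 :: "cvec \<Rightarrow> complex" where "c1 v = fst v"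
definition c2 :: "cvec \<Rightarrow> complex" where "c2 v = fst (snd v)"
definition c3 :: "cvec \<Rightarrow> complex" where "c3 v = snd (snd v)"

definition zvec :: cvec where "zvec = (0, 0, 0)"

definition smul :: "complex \<Rightarrow> cvec \<Rightarrow> cvec" where
  "smul c v = (c * c1 v, c * c2 v, c * c3 v)"

definition dot :: "cvec \<Rightarrow> cvec \<Rightarrow> complex" where
  "dot u v = c1 u * c1 v + c2 u * c2 v + c3 u * c3 v"

definition cross :: "cvec \<Rightarrow> cvec \<Rightarrow> cvec" where
  "cross u v = (c2 u * c3 v - c3 u * c2 v, c3 u * c1 v - c1 u * c3 v, c1 u * c2 v - c2 u * c1 v)"

definition det3 :: "cvec \<Rightarrow> cvec \<Rightarrow> cvec \<Rightarrow> complex" where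
  "det3 u v w = dot u (cross v w)"

definition proj_eq :: "cvec \<Rightarrow> cvec \<Rightarrow> bool" where
  "proj_eq u v \<longleftrightarrow> u \<noteq> zvec \<and> v \<noteq> zvec \<and> (\<exists>c. v = smul c u)"

text \<open>Heptagon: L i (i = 1..7) is the coefficient vector of the line
  L_i = {x. dot (L i) x = 0}; lines distinct, no three concurrent.\<close>
definition heptagon :: "(nat \<Rightarrow> cvec) \<Rightarrow> bool" where
  "heptagon L \<longleftrightarrow>
     (\<forall>i\<in>{1..7}. L i \<noteq> zvec) \<and>
     (\<forall>i\<in>{1..7}. \<forall>j\<in>{1..7}. i \<noteq> j \<longrightarrow> cross (L i) (L j) \<noteq> zvec) \<and>
     (\<forall>i\<in>{1..7}. \<forall>j\<in>{1..7}. \<forall>k\<in>{1..7}. i \<noteq> j \<and> j \<noteq> k \<and> i \<noteq> k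
          \<longrightarrow> det3 (L i) (L j) (L k) \<noteq> 0)"

text \<open>A representative of the intersection point p_ij = L_i \<inter> L_j.\<close>
definition pt :: "(nat \<Rightarrow> cvec) \<Rightarrow> nat \<Rightarrow> nat \<Rightarrow> cvec" where
  "pt L i j = cross (L i) (L j)"

definition res_pairs :: "(nat \<times> nat) set" where
  "res_pairs = {(i, j). 1 \<le> i \<and> i < j \<and> j \<le> 7 \<and> j - i \<noteq> 1 \<and> j - i \<noteq> 6}"

text \<open>Ternary forms, given by coefficient functions on exponent triples.\<close>
type_synonym form = "nat \<times> nat \<times> nat \<Rightarrow> complex"

definition monoms :: "nat \<Rightarrow> (nat \<times> nat \<times> nat) set" where
  "monoms d = {m. fst m + fst (snd m) + snd (snd m) = d}"

definition hom_form :: "nat \<Rightarrow> form \<Rightarrow> bool" where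
  "hom_form d F \<longleftrightarrow> (\<forall>m. F m \<noteq> 0 \<longrightarrow> m \<in> monoms d)"

definition feval :: "nat \<Rightarrow> form \<Rightarrow> cvec \<Rightarrow> complex" where
  "feval d F v = (\<Sum>m\<in>monoms d. F m * c1 v ^ fst m * c2 v ^ fst (snd m) * c3 v ^ snd (snd m))"

definition dX :: "form \<Rightarrow> form" where
  "dX F = (\<lambda>(a, b, c). of_nat (a + 1) * F (a + 1, b, c))"
definition dY :: "form \<Rightarrow> form" where
  "dY F = (\<lambda>(a, b, c). of_nat (b + 1) * F (a, b + 1, c))"
definition dZ :: "form \<Rightarrow> form" where
  "dZ F = (\<lambda>(a, b, c). of_nat (c + 1) * F (a, b, c + 1))"

definition smooth_curve :: "nat \<Rightarrow> form \<Rightarrow> bool" where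
  "smooth_curve d F \<longleftrightarrow> hom_form d F \<and> F \<noteq> (\<lambda>_. 0) \<and>
     (\<forall>v. v \<noteq> zvec \<and> feval d F v = 0 \<longrightarrow>
        \<not> (feval (d - 1) (dX F) v = 0 \<and> feval (d - 1) (dY F) v = 0 \<and> feval (d - 1) (dZ F) v = 0))"

definition adjoint_quartic :: "(nat \<Rightarrow> cvec) \<Rightarrow> form \<Rightarrow> bool" where
  "adjoint_quartic L C \<longleftrightarrow> hom_form 4 C \<and> C \<noteq> (\<lambda>_. 0) \<and>
     (\<forall>(i, j)\<in>res_pairs. feval 4 C (pt L i j) = 0) \<and>
     (\<forall>C'. hom_form 4 C' \<and> (\<forall>(i, j)\<in>res_pairs. feval 4 C' (pt L i j) = 0)
           \<longrightarrow> (\<exists>c. C' = (\<lambda>m. c * C m)))"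

text \<open>A local holomorphic parametrization of the curve F = 0 near p, with nonzero
  derivative as a map into P^2 (a local chart of the smooth curve).\<close>
definition local_param :: "nat \<Rightarrow> form \<Rightarrow> cvec \<Rightarrow> (complex \<Rightarrow> cvec) \<Rightarrow> bool" where
  "local_param d F p \<gamma> \<longleftrightarrow> (\<exists>r>0.
     (\<lambda>t. c1 (\<gamma> t)) holomorphic_on ball 0 r \<and>
     (\<lambda>t. c2 (\<gamma> t)) holomorphic_on ball 0 r \<and>
     (\<lambda>t. c3 (\<gamma> t)) holomorphic_on ball 0 r \<and>
     \<gamma> 0 = p \<and>
     (\<forall>t\<in>ball 0 r. \<gamma> t \<noteq> zvec \<and> feval d F (\<gamma> t) = 0) \<and>
     cross p (deriv (\<lambda>t. c1 (\<gamma> t)) 0, deriv (\<lambda>t. c2 (\<gamma> t)) 0, deriv (\<lambda>t. c3 (\<gamma> t)) 0) \<noteq> zvec)"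

definition curve_ord :: "nat \<Rightarrow> form \<Rightarrow> nat \<Rightarrow> form \<Rightarrow> cvec \<Rightarrow> int" where
  "curve_ord d F e G p =
     (THE n. \<forall>\<gamma>. local_param d F p \<gamma> \<longrightarrow> zorder (\<lambda>t. feval e G (\<gamma> t)) 0 = n)"

text \<open>Divisors on the curve: scale-invariant functions cvec => int
  (value at a representative of a point).\<close>
type_synonym divisor = "cvec \<Rightarrow> int"

definition divC :: "nat \<Rightarrow> form \<Rightarrow> nat \<Rightarrow> form \<Rightarrow> divisor" where
  "divC d F e G = (\<lambda>v. if v \<noteq> zvec \<and> feval d F v = 0 then curve_ord d F e G v else 0)"

definition pt_div :: "cvec \<Rightarrow> divisor" where
  "pt_div p = (\<lambda>v. if proj_eq p v then 1 else 0)"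

text \<open>Linear equivalence on the curve: D - D' is the divisor of a rational function
  G/H, with G, H forms of the same degree not vanishing identically on the curve.\<close>
definition lin_equiv :: "nat \<Rightarrow> form \<Rightarrow> divisor \<Rightarrow> divisor \<Rightarrow> bool" where
  "lin_equiv d F D D' \<longleftrightarrow> (\<exists>e G H. hom_form e G \<and> hom_form e H \<and>
     (\<exists>v. v \<noteq> zvec \<and> feval d F v = 0 \<and> feval e G v \<noteq> 0) \<and>
     (\<exists>v. v \<noteq> zvec \<and> feval d F v = 0 \<and> feval e H v \<noteq> 0) \<and>
     (\<forall>v. D v - D' v = divC d F e G v - divC d F e H v))"

text \<open>The linear form x (first coordinate); its divisor represents the class H.\<close>
definition xform :: form where
  "xform = (\<lambda>m. if m = (1, 0, 0) then 1 else 0)"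

definition eta :: "(nat \<Rightarrow> cvec) \<Rightarrow> form \<Rightarrow> divisor" where
  "eta L C = (\<lambda>v. (\<Sum>(i, j)\<in>res_pairs. pt_div (pt L i j) v) - 3 * divC 4 C 1 xform v)"

definition eta_rel :: "(nat \<Rightarrow> cvec) \<Rightarrow> form \<Rightarrow> nat \<times> nat \<Rightarrow> nat \<times> nat \<Rightarrow> nat \<times> nat \<Rightarrow> nat \<times> nat \<Rightarrow> bool" where
  "eta_rel L C a b c e \<longleftrightarrow> lin_equiv 4 C
     (\<lambda>v. eta L C v + pt_div (pt L (fst a) (snd a)) v - pt_div (pt L (fst b) (snd b)) v)
     (\<lambda>v. pt_div (pt L (fst c) (snd c)) v + pt_div (pt L (fst e) (snd e)) v)"

end

theory Submission
  imports Defs "HOL-Computational_Algebra.Fundamental_Theorem_Algebra"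
begin


lemma c123_simps[simp]: "c1 (a,b,c) = a" "c2 (a,b,c) = b" "c3 (a,b,c) = c"
  by (simp_all add: c1_def c2_def c3_def)

definition mon :: "cvec \<Rightarrow> nat \<times> nat \<times> nat \<Rightarrow> complex" where
  "mon v m = c1 v ^ fst m * c2 v ^ fst (snd m) * c3 v ^ snd (snd m)"

lemma feval_mon: "feval d F v = (\<Sum>m\<in>monoms d. F m * mon v m)"
  by (simp add: feval_def mon_def mult.assoc)

lemma monoms_sub: "monoms d \<subseteq> {..d} \<times> {..d} \<times> {..d}"
  by (auto simp: monoms_def)

lemma finite_monoms[simp]: "finite (monoms d)"
  by (rule finite_subset[OF monoms_sub]) auto

lemma feval_smul: "feval d F (smul s v) = s ^ d * feval d F v"
proof -
  have "feval d F (smul s v) = (\<Sum>m\<in>monoms d. s ^ d * (F m * mon v m))"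
    unfolding feval_mon
  proof (rule sum.cong[OF refl])
    fix m assume "m \<in> monoms d"
    then have "fst m + fst (snd m) + snd (snd m) = d" by (simp add: monoms_def)
    then have "s ^ d = s ^ fst m * s ^ fst (snd m) * s ^ snd (snd m)"
      by (metis power_add)
    then show "F m * mon (smul s v) m = s ^ d * (F m * mon v m)"
      by (simp add: mon_def smul_def power_mult_distrib)
  qed
  also have "\<dots> = s ^ d * feval d F v" by (simp add: feval_mon sum_distrib_left)
  finally show ?thesis .
qed

lemma feval_cont[continuous_intros]:
  assumes "continuous_on S x" "continuous_on S y" "continuous_on S z"
  shows "continuous_on S (\<lambda>t. feval d F (x t, y t, z t))"
  unfolding feval_def c123_simps by (intro continuous_intros assms) 

lemma feval_holo[holomorphic_intros]:
  assumes "x holomorphic_on S" "y holomorphic_on S" "z holomorphic_on S"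
  shows "(\<lambda>t. feval d F (x t, y t, z t)) holomorphic_on S"
  unfolding feval_def c123_simps by (intro holomorphic_intros assms) 

lemma feval_cont_vec: "continuous_on UNIV (feval d F)"
proof -
  have "continuous_on UNIV (\<lambda>v. feval d F (fst v, fst (snd v), snd (snd v)))"
    by (intro continuous_intros)
  then show ?thesis by simp
qed

lemma sumX:
  assumes "d \<ge> 1"
  shows "(\<Sum>m\<in>monoms d. F m * (of_nat (fst m) * X ^ (fst m - 1) * Y ^ fst (snd m) * Z ^ snd (snd m)))
         = feval (d-1) (dX F) (X,Y,Z)"
proof -
  let ?h = "\<lambda>(a::nat,b::nat,c::nat). (a+1,b,c)"
  let ?g = "\<lambda>m. F m * (of_nat (fst m) * X ^ (fst m - 1) * Y ^ fst (snd m) * Z ^ snd (snd m))"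
  have inj: "inj_on ?h (monoms (d-1))" by (auto simp: inj_on_def)
  have img: "?h ` monoms (d-1) = {m\<in>monoms d. fst m \<noteq> 0}"
  proof (rule set_eqI, rule iffI)
    fix m assume "m \<in> ?h ` monoms (d-1)" then show "m \<in> {m\<in>monoms d. fst m \<noteq> 0}"
      using assms by (auto simp: monoms_def)
  next
    fix m assume m: "m \<in> {m\<in>monoms d. fst m \<noteq> 0}"
    obtain a b c where mm: "m = (a,b,c)" by (cases m) auto
    with m have "(a-1,b,c) \<in> monoms (d-1)" "m = ?h (a-1,b,c)" by (auto simp: monoms_def)
    then show "m \<in> ?h ` monoms (d-1)" by blast
  qed
  have "sum ?g {m\<in>monoms d. fst m \<noteq> 0} = feval (d-1) (dX F) (X,Y,Z)"
    unfolding feval_def by (rule sum.reindex_cong[OF inj img[symmetric]]) (auto simp: dX_def)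
  moreover have "sum ?g {m\<in>monoms d. fst m \<noteq> 0} = sum ?g (monoms d)"
    by (rule sum.mono_neutral_left) auto
  ultimately show ?thesis by simp
qed

lemma sumY:
  assumes "d \<ge> 1"
  shows "(\<Sum>m\<in>monoms d. F m * (X ^ fst m * (of_nat (fst (snd m)) * Y ^ (fst (snd m) - 1)) * Z ^ snd (snd m)))
         = feval (d-1) (dY F) (X,Y,Z)"
proof -
  let ?h = "\<lambda>(a::nat,b::nat,c::nat). (a,b+1,c)"
  let ?g = "\<lambda>m. F m * (X ^ fst m * (of_nat (fst (snd m)) * Y ^ (fst (snd m) - 1)) * Z ^ snd (snd m))"
  have inj: "inj_on ?h (monoms (d-1))" by (auto simp: inj_on_def)
  have img: "?h ` monoms (d-1) = {m\<in>monoms d. fst (snd m) \<noteq> 0}"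
  proof (rule set_eqI, rule iffI)
    fix m assume "m \<in> ?h ` monoms (d-1)" then show "m \<in> {m\<in>monoms d. fst (snd m) \<noteq> 0}"
      using assms by (auto simp: monoms_def)
  next
    fix m assume m: "m \<in> {m\<in>monoms d. fst (snd m) \<noteq> 0}"
    obtain a b c where mm: "m = (a,b,c)" by (cases m) auto
    with m have "(a,b-1,c) \<in> monoms (d-1)" "m = ?h (a,b-1,c)" by (auto simp: monoms_def)
    then show "m \<in> ?h ` monoms (d-1)" by blast
  qed
  have "sum ?g {m\<in>monoms d. fst (snd m) \<noteq> 0} = feval (d-1) (dY F) (X,Y,Z)"
    unfolding feval_def by (rule sum.reindex_cong[OF inj img[symmetric]]) (auto simp: dY_def)
  moreover have "sum ?g {m\<in>monoms d. fst (snd m) \<noteq> 0} = sum ?g (monoms d)"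
    by (rule sum.mono_neutral_left) auto
  ultimately show ?thesis by simp
qed

lemma sumZ:
  assumes "d \<ge> 1"
  shows "(\<Sum>m\<in>monoms d. F m * (X ^ fst m * Y ^ fst (snd m) * (of_nat (snd (snd m)) * Z ^ (snd (snd m) - 1))))
         = feval (d-1) (dZ F) (X,Y,Z)"
proof -
  let ?h = "\<lambda>(a::nat,b::nat,c::nat). (a,b,c+1)"
  let ?g = "\<lambda>m. F m * (X ^ fst m * Y ^ fst (snd m) * (of_nat (snd (snd m)) * Z ^ (snd (snd m) - 1)))"
  have inj: "inj_on ?h (monoms (d-1))" by (auto simp: inj_on_def)
  have img: "?h ` monoms (d-1) = {m\<in>monoms d. snd (snd m) \<noteq> 0}"
  proof (rule set_eqI, rule iffI)
    fix m assume "m \<in> ?h ` monoms (d-1)" then show "m \<in> {m\<in>monoms d. snd (snd m) \<noteq> 0}"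
      using assms by (auto simp: monoms_def)
  next
    fix m assume m: "m \<in> {m\<in>monoms d. snd (snd m) \<noteq> 0}"
    obtain a b c where mm: "m = (a,b,c)" by (cases m) auto
    with m have "(a,b,c-1) \<in> monoms (d-1)" "m = ?h (a,b,c-1)" by (auto simp: monoms_def)
    then show "m \<in> ?h ` monoms (d-1)" by blast
  qed
  have "sum ?g {m\<in>monoms d. snd (snd m) \<noteq> 0} = feval (d-1) (dZ F) (X,Y,Z)"
    unfolding feval_def by (rule sum.reindex_cong[OF inj img[symmetric]]) (auto simp: dZ_def)
  moreover have "sum ?g {m\<in>monoms d. snd (snd m) \<noteq> 0} = sum ?g (monoms d)"
    by (rule sum.mono_neutral_left) auto
  ultimately show ?thesis by simp
qed

definition grad :: "nat \<Rightarrow> form \<Rightarrow> cvec \<Rightarrow> cvec" where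
  "grad d F v = (feval (d-1) (dX F) v, feval (d-1) (dY F) v, feval (d-1) (dZ F) v)"

lemma feval_deriv:
  assumes d: "d \<ge> 1"
    and dx: "(x has_field_derivative x') (at t within S)"
    and dy: "(y has_field_derivative y') (at t within S)"
    and dz: "(z has_field_derivative z') (at t within S)"
  shows "((\<lambda>t. feval d F (x t, y t, z t)) has_field_derivative
            dot (grad d F (x t, y t, z t)) (x', y', z')) (at t within S)"
proof -
  have D: "((\<lambda>t. \<Sum>m\<in>monoms d. F m * (x t ^ fst m * y t ^ fst (snd m) * z t ^ snd (snd m)))
     has_field_derivative (\<Sum>m\<in>monoms d. F m * (
        (of_nat (fst m) * x t ^ (fst m - 1) * x') * y t ^ fst (snd m) * z t ^ snd (snd m)
      + x t ^ fst m * (of_nat (fst (snd m)) * y t ^ (fst (snd m) - 1) * y') * z t ^ snd (snd m)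
      + x t ^ fst m * y t ^ fst (snd m) * (of_nat (snd (snd m)) * z t ^ (snd (snd m) - 1) * z'))))
     (at t within S)"
    by (rule DERIV_sum, (rule derivative_eq_intros dx dy dz refl)+) (simp add: algebra_simps)
  have E: "(\<Sum>m\<in>monoms d. F m * (
        (of_nat (fst m) * x t ^ (fst m - 1) * x') * y t ^ fst (snd m) * z t ^ snd (snd m)
      + x t ^ fst m * (of_nat (fst (snd m)) * y t ^ (fst (snd m) - 1) * y') * z t ^ snd (snd m)
      + x t ^ fst m * y t ^ fst (snd m) * (of_nat (snd (snd m)) * z t ^ (snd (snd m) - 1) * z')))
     = feval (d-1) (dX F) (x t, y t, z t) * x' + feval (d-1) (dY F) (x t, y t, z t) * y'
       + feval (d-1) (dZ F) (x t, y t, z t) * z'"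
    unfolding sumX[OF d, symmetric] sumY[OF d, symmetric] sumZ[OF d, symmetric]
    by (simp add: sum.distrib sum_distrib_left algebra_simps)
  show ?thesis using D unfolding E
    by (simp add: feval_def grad_def dot_def mult.assoc)
qed


lemma euler:
  assumes d: "d \<ge> 1"
  shows "dot (grad d F v) v = of_nat d * feval d F v"
proof -
  obtain X Y Z where v: "v = (X,Y,Z)" by (cases v) auto
  have sm: "\<And>s. smul s (X,Y,Z) = (s*X, s*Y, s*Z)" by (simp add: smul_def)
  have D1: "((\<lambda>s. feval d F (s*X, s*Y, s*Z)) has_field_derivative
            dot (grad d F (1*X, 1*Y, 1*Z)) (X, Y, Z)) (at 1)"
    by (rule feval_deriv[OF d]) (auto intro!: derivative_eq_intros)
  have eq: "(\<lambda>s. feval d F (s*X, s*Y, s*Z)) = (\<lambda>s. s ^ d * feval d F (X,Y,Z))"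
    using feval_smul[of d F _ "(X,Y,Z)"] by (simp add: sm)
  have D2: "((\<lambda>s. s ^ d * feval d F (X,Y,Z)) has_field_derivative
            of_nat d * 1 ^ (d - 1) * feval d F (X,Y,Z)) (at 1)"
    by (auto intro!: derivative_eq_intros)
  from DERIV_unique[OF D1[unfolded eq] D2] show ?thesis by (simp add: v)
qed

lemma grad_smul: "grad d F (smul s v) = smul (s ^ (d-1)) (grad d F v)"
  using feval_smul[unfolded smul_def] by (simp add: grad_def smul_def)

definition lin2 :: "complex \<Rightarrow> cvec \<Rightarrow> complex \<Rightarrow> cvec \<Rightarrow> cvec" where
  "lin2 a u b v = (a * c1 u + b * c1 v, a * c2 u + b * c2 v, a * c3 u + b * c3 v)"

lemma span2:
  assumes n: "cross u v \<noteq> zvec" and y: "det3 y u v = 0"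
  shows "\<exists>a b. y = lin2 a u b v"
proof -
  obtain u1 u2 u3 where u: "u = (u1,u2,u3)" by (cases u) auto
  obtain v1 v2 v3 where v: "v = (v1,v2,v3)" by (cases v) auto
  obtain y1 y2 y3 where yy: "y = (y1,y2,y3)" by (cases y) auto
  have h: "y1*(u2* v3-u3* v2) + y2*(u3* v1-u1* v3) + y3*(u1* v2-u2* v1) = 0"
    using y by (simp add: u v yy det3_def dot_def cross_def)
  consider "u2* v3-u3* v2 \<noteq> 0" | "u3* v1-u1* v3 \<noteq> 0" | "u1* v2-u2* v1 \<noteq> 0"
    using n by (auto simp: u v cross_def zvec_def)
  then show ?thesis
  proof cases
    case 1
    let ?n = "u2* v3-u3* v2"
    have "?n*y1 = (y2* v3 - y3* v2)*u1 + (u2*y3 - u3*y2)* v1" using h by algebra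
    moreover have "?n*y2 = (y2* v3 - y3* v2)*u2 + (u2*y3 - u3*y2)* v2" by algebra
    moreover have "?n*y3 = (y2* v3 - y3* v2)*u3 + (u2*y3 - u3*y2)* v3" by algebra
    ultimately have "y = lin2 ((y2* v3 - y3* v2)/?n) u ((u2*y3 - u3*y2)/?n) v"
      using 1 unfolding lin2_def u v yy by (simp add: divide_simps) (metis mult.commute)
    then show ?thesis by blast
  next
    case 2
    let ?n = "u3* v1-u1* v3"
    have "?n*y1 = (y3* v1 - y1* v3)*u1 + (u3*y1 - u1*y3)* v1" by algebra
    moreover have "?n*y2 = (y3* v1 - y1* v3)*u2 + (u3*y1 - u1*y3)* v2" using h by algebra
    moreover have "?n*y3 = (y3* v1 - y1* v3)*u3 + (u3*y1 - u1*y3)* v3" by algebra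
    ultimately have "y = lin2 ((y3* v1 - y1* v3)/?n) u ((u3*y1 - u1*y3)/?n) v"
      using 2 unfolding lin2_def u v yy by (simp add: divide_simps) (metis mult.commute)
    then show ?thesis by blast
  next
    case 3
    let ?n = "u1* v2-u2* v1"
    have "?n*y1 = (y1* v2 - y2* v1)*u1 + (u1*y2 - u2*y1)* v1" by algebra
    moreover have "?n*y2 = (y1* v2 - y2* v1)*u2 + (u1*y2 - u2*y1)* v2" by algebra
    moreover have "?n*y3 = (y1* v2 - y2* v1)*u3 + (u1*y2 - u2*y1)* v3" using h by algebra
    ultimately have "y = lin2 ((y1* v2 - y2* v1)/?n) u ((u1*y2 - u2*y1)/?n) v"
      using 3 unfolding lin2_def u v yy by (simp add: divide_simps) (metis mult.commute)
    then show ?thesis by blast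
  qed
qed

lemma perp2:
  assumes n: "cross A B \<noteq> zvec" and "dot y A = 0" "dot y B = 0"
  shows "\<exists>c. y = smul c (cross A B)"
proof -
  obtain u1 u2 u3 where u: "A = (u1,u2,u3)" by (cases A) auto
  obtain v1 v2 v3 where v: "B = (v1,v2,v3)" by (cases B) auto
  obtain y1 y2 y3 where yy: "y = (y1,y2,y3)" by (cases y) auto
  have h1: "y1*u1+y2*u2+y3*u3 = 0" and h2: "y1* v1+y2* v2+y3* v3 = 0"
    using assms by (simp_all add: u v yy dot_def)
  define n1 where "n1 = u2* v3-u3* v2"
  define n2 where "n2 = u3* v1-u1* v3"
  define n3 where "n3 = u1* v2-u2* v1"
  have cr: "cross A B = (n1,n2,n3)" by (simp add: u v cross_def n1_def n2_def n3_def)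
  have e12: "n1*y2 = n2*y1" using h1 h2 unfolding n1_def n2_def by algebra
  have e13: "n1*y3 = n3*y1" using h1 h2 unfolding n1_def n3_def by algebra
  have e23: "n2*y3 = n3*y2" using h1 h2 unfolding n2_def n3_def by algebra
  consider "n1 \<noteq> 0" | "n2 \<noteq> 0" | "n3 \<noteq> 0" using n by (auto simp: cr zvec_def)
  then show ?thesis
  proof cases
    case 1 then have "y = smul (y1/n1) (cross A B)"
      using e12 e13 by (simp add: cr smul_def yy field_simps)
    then show ?thesis by blast
  next
    case 2 then have "y = smul (y2/n2) (cross A B)"
      using e12 e23 by (simp add: cr smul_def yy field_simps)
    then show ?thesis by blast
  next
    case 3 then have "y = smul (y3/n3) (cross A B)"
      using e13 e23 by (simp add: cr smul_def yy field_simps)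
    then show ?thesis by blast
  qed
qed

lemma det3_perp:
  assumes "l \<noteq> zvec" "dot l P = 0" "dot l v = 0" "dot l B = 0"
  shows "det3 P v B = 0"
proof -
  obtain u1 u2 u3 where u: "P = (u1,u2,u3)" by (cases P) auto
  obtain v1 v2 v3 where v: "v = (v1,v2,v3)" by (cases v) auto
  obtain y1 y2 y3 where yy: "B = (y1,y2,y3)" by (cases B) auto
  obtain l1 l2 l3 where ll: "l = (l1,l2,l3)" by (cases l) auto
  define D where "D = det3 P v B"
  have h: "l1*u1+l2*u2+l3*u3 = 0" "l1* v1+l2* v2+l3* v3 = 0" "l1*y1+l2*y2+l3*y3 = 0"
    using assms by (simp_all add: u v yy ll dot_def)
  have Dd: "D = u1*(v2*y3-v3*y2) + u2*(v3*y1-v1*y3) + u3*(v1*y2-v2*y1)"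
    by (simp add: D_def det3_def dot_def cross_def u v yy)
  have "D * l1 = 0" "D * l2 = 0" "D * l3 = 0" using h unfolding Dd by algebra+
  with assms(1) show ?thesis unfolding D_def[symmetric] by (auto simp: ll zvec_def)
qed

lemma cross_zero_smul:
  assumes "p \<noteq> zvec" "cross p v = zvec"
  shows "\<exists>c. v = smul c p"
proof -
  obtain u1 u2 u3 where u: "p = (u1,u2,u3)" by (cases p) auto
  obtain v1 v2 v3 where v: "v = (v1,v2,v3)" by (cases v) auto
  have h: "u2* v3 = u3* v2" "u3* v1 = u1* v3" "u1* v2 = u2* v1"
    using assms(2) by (auto simp: u v cross_def zvec_def)
  consider "u1 \<noteq> 0" | "u2 \<noteq> 0" | "u3 \<noteq> 0" using assms(1) by (auto simp: u zvec_def)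
  then show ?thesis
  proof cases
    case 1 then have "v = smul (v1/u1) p" using h by (simp add: u v smul_def field_simps)
    then show ?thesis by blast
  next
    case 2 then have "v = smul (v2/u2) p" using h by (simp add: u v smul_def field_simps)
    then show ?thesis by blast
  next
    case 3 then have "v = smul (v3/u3) p" using h by (simp add: u v smul_def field_simps)
    then show ?thesis by blast
  qed
qed

lemma cross_smul_zero: "cross p (smul c p) = zvec"
  by (simp add: cross_def smul_def zvec_def algebra_simps)

lemma proj_eq_iff: "proj_eq p v \<longleftrightarrow> p \<noteq> zvec \<and> v \<noteq> zvec \<and> cross p v = zvec"
  unfolding proj_eq_def using cross_zero_smul cross_smul_zero by blast

lemma smul_zvec_iff: "smul c v = zvec \<longleftrightarrow> c = 0 \<or> v = zvec"
  by (cases v) (auto simp: smul_def zvec_def)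

lemma dot_smul: "dot l (smul c v) = c * dot l v"
  by (simp add: dot_def smul_def algebra_simps)

lemma dot_lin2: "dot l (lin2 a u b v) = a * dot l u + b * dot l v"
  by (simp add: dot_def lin2_def algebra_simps)

lemma cross_lin2_right: "cross p (lin2 a u b v) = lin2 a (cross p u) b (cross p v)"
  by (simp add: cross_def lin2_def algebra_simps)

lemma det3_cross: "det3 y u v = dot y (cross u v)" by (simp add: det3_def)


definition fpoly :: "nat \<Rightarrow> form \<Rightarrow> cvec \<Rightarrow> cvec \<Rightarrow> complex poly" where
  "fpoly d F A B = (\<Sum>m\<in>monoms d. smult (F m) ([:c1 A, c1 B:] ^ fst m * [:c2 A, c2 B:] ^ fst (snd m)
      * [:c3 A, c3 B:] ^ snd (snd m)))"

lemma poly_fpoly: "poly (fpoly d F A B) s = feval d F (lin2 1 A s B)"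
  by (simp add: fpoly_def feval_def poly_sum lin2_def poly_power mult.assoc)

lemma degree_fpoly: "degree (fpoly d F A B) \<le> d"
  unfolding fpoly_def
proof (rule degree_sum_le)
  fix m assume m: "m \<in> monoms d"
  have "degree ([:c1 A, c1 B:] ^ fst m * [:c2 A, c2 B:] ^ fst (snd m) * [:c3 A, c3 B:] ^ snd (snd m))
     \<le> fst m + fst (snd m) + snd (snd m)"
    by (rule order.trans[OF degree_mult_le] add_mono order.trans[OF degree_power_le])+
       (auto intro: order.trans[OF degree_power_le])
  also have "\<dots> = d" using m by (simp add: monoms_def)
  finally show "degree (smult (F m) ([:c1 A, c1 B:] ^ fst m * [:c2 A, c2 B:] ^ fst (snd m)
      * [:c3 A, c3 B:] ^ snd (snd m))) \<le> d"
    by (meson degree_smult_le order.trans)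
qed auto


lemma cvec_eta[simp]: "(c1 v, c2 v, c3 v) = v"
  by (simp add: c1_def c2_def c3_def)

lemma dirderiv:
  assumes "d \<ge> 1"
  shows "((\<lambda>t. feval d F (lin2 1 P t Q)) has_field_derivative dot (grad d F (lin2 1 P t Q)) Q) (at t)"
proof -
  have "((\<lambda>t. feval d F (c1 P + t * c1 Q, c2 P + t * c2 Q, c3 P + t * c3 Q)) has_field_derivative
          dot (grad d F (c1 P + t * c1 Q, c2 P + t * c2 Q, c3 P + t * c3 Q)) (c1 Q, c2 Q, c3 Q)) (at t)"
    by (rule feval_deriv[OF assms]) (auto intro!: derivative_eq_intros)
  then show ?thesis by (simp add: lin2_def)
qed

definition sel :: "nat \<Rightarrow> cvec \<Rightarrow> complex" where
  "sel k v = (if k = 1 then c1 v else if k = 2 then c2 v else c3 v)"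
definition dsel :: "nat \<Rightarrow> form \<Rightarrow> form" where
  "dsel k F = (if k = 1 then dX F else if k = 2 then dY F else dZ F)"

lemma sel_grad: "sel k (grad d F v) = feval (d-1) (dsel k F) v"
  by (simp add: sel_def dsel_def grad_def)

lemma sel_smul: "sel k (smul c v) = c * sel k v"
  by (simp add: sel_def smul_def)

lemma sel_nonzero: "v \<noteq> zvec \<Longrightarrow> \<exists>k. sel k v \<noteq> 0"
proof -
  assume "v \<noteq> zvec"
  then have "sel 1 v \<noteq> 0 \<or> sel 2 v \<noteq> 0 \<or> sel 3 v \<noteq> 0" by (cases v) (auto simp: sel_def zvec_def)
  then show ?thesis by blast
qed

lemma smooth_grad:
  assumes "smooth_curve d F" "v \<noteq> zvec" "feval d F v = 0"
  shows "grad d F v \<noteq> zvec"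
proof -
  obtain a b c where v: "v = (a,b,c)" by (cases v) auto
  show ?thesis using assms unfolding v by (auto simp: smooth_curve_def grad_def zvec_def)
qed

lemma lin2_nonzero:
  assumes "cross A B \<noteq> zvec" "a \<noteq> 0 \<or> b \<noteq> 0"
  shows "lin2 a A b B \<noteq> zvec"
proof
  assume h: "lin2 a A b B = zvec"
  have "smul b (cross A B) = cross A (lin2 a A b B)"
    by (simp add: cross_def lin2_def smul_def algebra_simps)
  also have "\<dots> = zvec" unfolding h by (simp add: cross_def zvec_def)
  finally have 1: "smul b (cross A B) = zvec" .
  have "smul (-a) (cross A B) = cross B (lin2 a A b B)"
    by (simp add: cross_def lin2_def smul_def algebra_simps)
  also have "\<dots> = zvec" unfolding h by (simp add: cross_def zvec_def)
  finally have 2: "smul (-a) (cross A B) = zvec" .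
  from 1 2 assms show False by (auto simp: smul_zvec_iff)
qed

lemma deriv_zero_dir:
  assumes "\<And>t. feval 4 C (lin2 1 P t Q) = 0"
  shows "dot (grad 4 C P) Q = 0"
proof -
  have "((\<lambda>t. feval 4 C (lin2 1 P t Q)) has_field_derivative dot (grad 4 C (lin2 1 P 0 Q)) Q) (at 0)"
    by (rule dirderiv) auto
  moreover have "lin2 1 P 0 Q = P" by (cases P) (simp add: lin2_def)
  ultimately have "((\<lambda>t. 0) has_field_derivative dot (grad 4 C P) Q) (at 0)"
    using assms by simp
  then show ?thesis using DERIV_const DERIV_unique by blast
qed

lemma no_line_in_curve:
  assumes sm: "smooth_curve 4 C" and AB: "cross A B \<noteq> zvec"
  shows "\<exists>a b. feval 4 C (lin2 a A b B) \<noteq> 0"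
proof (rule ccontr)
  assume "\<not> ?thesis"
  then have Z: "\<And>a b. feval 4 C (lin2 a A b B) = 0" by blast
  have gperp: "\<exists>c. grad 4 C (lin2 a A b B) = smul c (cross A B)" for a b
  proof (rule perp2[OF AB])
    have e1: "lin2 1 (lin2 a A b B) t A = lin2 (a + t) A b B" for t
      by (simp add: lin2_def algebra_simps)
    have e2: "lin2 1 (lin2 a A b B) t B = lin2 a A (b + t) B" for t
      by (simp add: lin2_def algebra_simps)
    show "dot (grad 4 C (lin2 a A b B)) A = 0" by (rule deriv_zero_dir) (simp add: e1 Z)
    show "dot (grad 4 C (lin2 a A b B)) B = 0" by (rule deriv_zero_dir) (simp add: e2 Z)
  qed
  obtain k where k: "sel k (cross A B) \<noteq> 0" using sel_nonzero[OF AB] by blast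
  have noroot: "sel k (grad 4 C (lin2 a A b B)) \<noteq> 0" if "a \<noteq> 0 \<or> b \<noteq> 0" for a b
  proof
    assume h: "sel k (grad 4 C (lin2 a A b B)) = 0"
    obtain c where c: "grad 4 C (lin2 a A b B) = smul c (cross A B)" using gperp by blast
    from h k have "c = 0" by (simp add: c sel_smul)
    then have "grad 4 C (lin2 a A b B) = zvec" by (simp add: c smul_def zvec_def)
    moreover have "grad 4 C (lin2 a A b B) \<noteq> zvec"
      by (rule smooth_grad[OF sm lin2_nonzero[OF AB that] Z])
    ultimately show False by simp
  qed
  define h1 where "h1 = fpoly 3 (dsel k C) A B"
  have h1e: "poly h1 s = sel k (grad 4 C (lin2 1 A s B))" for s
    by (simp add: h1_def poly_fpoly sel_grad)
  have "constant (poly h1)"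
  proof (rule ccontr)
    assume "\<not> constant (poly h1)"
    then obtain s where "poly h1 s = 0" using fundamental_theorem_of_algebra by blast
    with noroot[of 1 s] h1e show False by simp
  qed
  then have c1: "sel k (grad 4 C (lin2 1 A s B)) = sel k (grad 4 C (lin2 1 A 0 B))" for s
    unfolding constant_def h1e[symmetric] by blast
  define h2 where "h2 = fpoly 3 (dsel k C) B A"
  have h2e: "poly h2 s = sel k (grad 4 C (lin2 1 B s A))" for s
    by (simp add: h2_def poly_fpoly sel_grad)
  have swap: "lin2 1 B s A = lin2 s A 1 B" for s by (simp add: lin2_def algebra_simps)
  have "constant (poly h2)"
  proof (rule ccontr)
    assume "\<not> constant (poly h2)"
    then obtain s where "poly h2 s = 0" using fundamental_theorem_of_algebra by blast
    with noroot[of s 1] h2e swap show False by simp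
  qed
  then have c2: "sel k (grad 4 C (lin2 1 B s A)) = sel k (grad 4 C (lin2 1 B 0 A))" for s
    unfolding constant_def h2e[symmetric] by blast
  have hom: "lin2 1 A s B = smul s (lin2 1 B (1/s) A)" if "s \<noteq> 0" for s
    using that by (simp add: lin2_def smul_def field_simps)
  have "sel k (grad 4 C (lin2 1 A s B)) = s^3 * sel k (grad 4 C (lin2 1 B 0 A))" if "s \<noteq> 0" for s
    using hom[OF that] c2[of "1/s"] by (simp add: grad_smul sel_smul)
  from this[of 1] this[of 2] c1[of 1] c1[of 2]
  have "sel k (grad 4 C (lin2 1 A 0 B)) = 0" by simp
  with noroot[of 1 0] show False by simp
qed


lemma feval_zvec: "d \<ge> 1 \<Longrightarrow> feval d F zvec = 0"
  using feval_smul[of d F 0 zvec] by (cases d) (auto simp: smul_def zvec_def)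

lemma param_plane:
  assumes l: "l \<noteq> zvec" and "dot l v = 0" "dot l B = 0" "dot l P = 0"
    and vB: "cross v B \<noteq> zvec" and PB: "cross P B \<noteq> zvec"
  shows "\<exists>a s. a \<noteq> 0 \<and> P = smul a (lin2 1 v s B)"
proof -
  have "det3 P v B = 0" by (rule det3_perp[OF l]) (use assms in auto)
  then obtain a b where P: "P = lin2 a v b B" using span2[OF vB] by blast
  have "a \<noteq> 0"
  proof
    assume "a = 0"
    then have "cross P B = zvec" by (simp add: P lin2_def cross_def zvec_def algebra_simps)
    with PB show False by simp
  qed
  then have "P = smul a (lin2 1 v (b/a) B)" by (simp add: P lin2_def smul_def field_simps)
  with \<open>a \<noteq> 0\<close> show ?thesis by blast
qed

lemma feval_smul_zero: "feval 4 C (smul a P) = 0 \<longleftrightarrow> a = 0 \<or> feval 4 C P = 0"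
  by (simp add: feval_smul)

lemma cross_smul_left: "cross (smul a P) Q = smul a (cross P Q)"
  by (simp add: cross_def smul_def algebra_simps)
lemma cross_smul_right: "cross P (smul a Q) = smul a (cross P Q)"
  by (simp add: cross_def smul_def algebra_simps)
lemma cross_self: "cross P P = zvec"
  by (simp add: cross_def zvec_def algebra_simps)
lemma cross_anti: "cross P Q = zvec \<longleftrightarrow> cross Q P = zvec"
  by (cases P, cases Q) (auto simp: cross_def zvec_def algebra_simps)

lemma line_setup:
  fixes q :: "nat \<Rightarrow> cvec"
  assumes sm: "smooth_curve 4 C" and l: "l \<noteq> zvec"
    and q: "\<And>k. k < 4 \<Longrightarrow> q k \<noteq> zvec \<and> feval 4 C (q k) = 0 \<and> dot l (q k) = 0"
    and qind: "\<And>j k. j < 4 \<Longrightarrow> k < 4 \<Longrightarrow> j \<noteq> k \<Longrightarrow> cross (q j) (q k) \<noteq> zvec"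
    and v: "v \<noteq> zvec" "feval 4 C v = 0" "dot l v = 0"
  obtains B and s :: "nat \<Rightarrow> complex" and a :: "nat \<Rightarrow> complex" where "dot l B = 0" "feval 4 C B \<noteq> 0" "cross v B \<noteq> zvec"
    "fpoly 4 C v B \<noteq> 0" "\<And>k. k < 4 \<Longrightarrow> a k \<noteq> 0 \<and> q k = smul (a k) (lin2 1 v (s k) B)"
    "\<And>k. k < 4 \<Longrightarrow> poly (fpoly 4 C v B) (s k) = 0" "inj_on s {..<4}"
proof -
  obtain \<alpha> \<beta> where B: "feval 4 C (lin2 \<alpha> (q 0) \<beta> (q 1)) \<noteq> 0"
    using no_line_in_curve[OF sm qind[of 0 1]] by auto
  define B where "B = lin2 \<alpha> (q 0) \<beta> (q 1)"
  have lB: "dot l B = 0" using q[of 0] q[of 1] by (simp add: B_def dot_lin2)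
  have CB: "feval 4 C B \<noteq> 0" using B by (simp add: B_def)
  have Bnz: "B \<noteq> zvec" using CB feval_zvec[of 4 C] by auto
  have vB: "cross v B \<noteq> zvec"
  proof
    assume "cross v B = zvec"
    then obtain c where "B = smul c v" using cross_zero_smul[OF v(1)] by blast
    with CB v(2) show False by (simp add: feval_smul)
  qed
  have "\<forall>k\<in>{..<4}. \<exists>a s. a \<noteq> 0 \<and> q k = smul a (lin2 1 v s B)"
  proof
    fix k :: nat assume k: "k \<in> {..<4}"
    have "cross (q k) B \<noteq> zvec"
    proof
      assume "cross (q k) B = zvec"
      then obtain c where "B = smul c (q k)" using cross_zero_smul q k by blast
      with CB q[of k] k show False by (simp add: feval_smul)
    qed
    then show "\<exists>a s. a \<noteq> 0 \<and> q k = smul a (lin2 1 v s B)"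
      by (intro param_plane[OF l v(3) lB]) (use q k vB in auto)
  qed
  then obtain a s where as: "\<And>k. k < 4 \<Longrightarrow> a k \<noteq> 0 \<and> q k = smul (a k) (lin2 1 v (s k) B)"
    by (metis lessThan_iff)
  have roots: "poly (fpoly 4 C v B) (s k) = 0" if "k < 4" for k
    using q[OF that] as[OF that] by (simp add: poly_fpoly feval_smul)
  have inj: "inj_on s {..<4}"
  proof (rule inj_onI)
    fix j k assume j: "j \<in> {..<4}" and k: "k \<in> {..<4}" and e: "s j = s k"
    show "j = k"
    proof (rule ccontr)
      assume "j \<noteq> k"
      then have "cross (q j) (q k) \<noteq> zvec" using qind j k by auto
      moreover have "cross (q j) (q k) = zvec"
      proof -
        have "q j = smul (a j / a k) (q k)"
          using as[of j] as[of k] j k e by (simp add: smul_def)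
        then show ?thesis by (simp only: cross_smul_left cross_self) (simp add: smul_def zvec_def)
      qed
      ultimately show False by simp
    qed
  qed
  have nz: "fpoly 4 C v B \<noteq> 0"
  proof
    assume z: "fpoly 4 C v B = 0"
    have "poly (fpoly 4 C B v) t = 0" if "t \<noteq> 0" for t
    proof -
      have "lin2 1 B t v = smul t (lin2 1 v (1/t) B)" using that by (simp add: lin2_def smul_def field_simps)
      then have "poly (fpoly 4 C B v) t = t^4 * poly (fpoly 4 C v B) (1/t)"
        by (simp add: poly_fpoly feval_smul)
      then show ?thesis using z by simp
    qed
    then have "{t. t \<noteq> 0} \<subseteq> {t. poly (fpoly 4 C B v) t = 0}" by auto
    moreover have "infinite {t::complex. t \<noteq> 0}"
    proof -
      have "{t::complex. t \<noteq> 0} = UNIV - {0}" by auto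
      then show ?thesis by (simp add: infinite_UNIV_char_0)
    qed
    ultimately have "infinite {t. poly (fpoly 4 C B v) t = 0}" using finite_subset by blast
    then have "fpoly 4 C B v = 0" using poly_roots_finite by blast
    then have "poly (fpoly 4 C B v) 0 = 0" by simp
    moreover have "lin2 1 B 0 v = B" by (simp add: lin2_def)
    ultimately show False using CB by (simp add: poly_fpoly)
  qed
  show ?thesis by (rule that[OF lB CB vB nz as roots inj]) auto
qed

lemma line_points:
  fixes q :: "nat \<Rightarrow> cvec"
  assumes sm: "smooth_curve 4 C" and l: "l \<noteq> zvec"
    and q: "\<And>k. k < 4 \<Longrightarrow> q k \<noteq> zvec \<and> feval 4 C (q k) = 0 \<and> dot l (q k) = 0"
    and qind: "\<And>j k. j < 4 \<Longrightarrow> k < 4 \<Longrightarrow> j \<noteq> k \<Longrightarrow> cross (q j) (q k) \<noteq> zvec"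
    and v: "v \<noteq> zvec" "feval 4 C v = 0" "dot l v = 0"
  shows "\<exists>k<4. cross (q k) v = zvec"
proof (rule ccontr)
  assume nk: "\<not> ?thesis"
  show False
  proof (rule line_setup[OF sm l, of q, OF q qind v])
  fix B and a :: "nat \<Rightarrow> complex" and s :: "nat \<Rightarrow> complex"
  assume lB: "dot l B = 0" and CB: "feval 4 C B \<noteq> 0" and vB: "cross v B \<noteq> zvec"
    and nz: "fpoly 4 C v B \<noteq> 0" and as: "\<And>k. k < 4 \<Longrightarrow> a k \<noteq> 0 \<and> q k = smul (a k) (lin2 1 v (s k) B)"
    and roots: "\<And>k. k < 4 \<Longrightarrow> poly (fpoly 4 C v B) (s k) = 0" and inj: "inj_on s {..<4}"
  have s0: "s k \<noteq> 0" if "k < 4" for k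
  proof
    assume "s k = 0"
    then have "q k = smul (a k) v" using as[OF that] by (cases v) (simp add: lin2_def smul_def)
    then have "cross (q k) v = zvec" by (simp only: cross_smul_left cross_self) (simp add: smul_def zvec_def)
    with nk that show False by blast
  qed
  have sub: "insert 0 (s ` {..<4}) \<subseteq> {x. poly (fpoly 4 C v B) x = 0}"
    using roots v(2) by (auto simp: poly_fpoly lin2_def)
  have "card (insert 0 (s ` {..<4})) = 5"
    using s0 inj by (subst card_insert_disjoint) (auto simp: card_image)
  moreover have "card (insert 0 (s ` {..<4})) \<le> card {x. poly (fpoly 4 C v B) x = 0}"
    by (rule card_mono[OF poly_roots_finite[OF nz] sub])
  moreover have "card {x. poly (fpoly 4 C v B) x = 0} \<le> 4"
    using card_poly_roots_bound[OF nz] degree_fpoly[of 4 C v B] by linarith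
  ultimately show False by simp
  qed
qed


lemma cross_lin2_v: "cross (lin2 1 v s B) v = smul s (cross B v)"
  by (simp add: cross_def lin2_def smul_def algebra_simps)

lemma dvd_X: "poly (p::complex poly) 0 = 0 \<Longrightarrow> \<exists>r. p = [:0,1:] * r"
  using poly_eq_0_iff_dvd[of p 0] by (auto elim: dvdE)

lemma line_transversal:
  fixes q :: "nat \<Rightarrow> cvec"
  assumes sm: "smooth_curve 4 C" and l: "l \<noteq> zvec"
    and q: "\<And>k. k < 4 \<Longrightarrow> q k \<noteq> zvec \<and> feval 4 C (q k) = 0 \<and> dot l (q k) = 0"
    and qind: "\<And>j k. j < 4 \<Longrightarrow> k < 4 \<Longrightarrow> j \<noteq> k \<Longrightarrow> cross (q j) (q k) \<noteq> zvec"
    and v: "v \<noteq> zvec" "feval 4 C v = 0" "dot l v = 0"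
    and u: "dot (grad 4 C v) u = 0" "cross v u \<noteq> zvec"
  shows "dot l u \<noteq> 0"
proof
  assume lu: "dot l u = 0"
  obtain k0 where k0: "k0 < 4" "cross (q k0) v = zvec" using line_points[OF sm l, of q, OF q qind v] by blast
  show False
  proof (rule line_setup[OF sm l, of q, OF q qind v])
  fix B and a :: "nat \<Rightarrow> complex" and s :: "nat \<Rightarrow> complex"
  assume lB: "dot l B = 0" and CB: "feval 4 C B \<noteq> 0" and vB: "cross v B \<noteq> zvec"
    and nz: "fpoly 4 C v B \<noteq> 0" and as: "\<And>k. k < 4 \<Longrightarrow> a k \<noteq> 0 \<and> q k = smul (a k) (lin2 1 v (s k) B)"
    and roots: "\<And>k. k < 4 \<Longrightarrow> poly (fpoly 4 C v B) (s k) = 0" and inj: "inj_on s {..<4}"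
  have sk0: "s k0 = 0"
  proof -
    have "zvec = cross (q k0) v" using k0 by simp
    also have "\<dots> = smul (a k0) (smul (s k0) (cross B v))"
      using as[OF k0(1)] by (simp add: cross_smul_left cross_lin2_v)
    finally have "smul (a k0) (smul (s k0) (cross B v)) = zvec" by simp
    moreover have "cross B v \<noteq> zvec" using vB cross_anti by blast
    ultimately show ?thesis using as[OF k0(1)] by (simp add: smul_zvec_iff)
  qed
  have sj: "s j \<noteq> 0" if "j < 4" "j \<noteq> k0" for j
    using inj_onD[OF inj, of j k0] that k0(1) sk0 by auto
  have "det3 B v u = 0" by (rule det3_perp[OF l]) (use lB v lu in auto)
  then obtain \<alpha> \<beta> where B: "B = lin2 \<alpha> v \<beta> u" using span2[OF u(2)] by blast
  have e4: "dot (grad 4 C v) v = 0" using euler[of 4 C v] v(2) by simp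
  have d0: "dot (grad 4 C v) B = 0" by (simp add: B dot_lin2 e4 u(1))
  define \<phi> where "\<phi> = fpoly 4 C v B"
  have v0: "lin2 1 v 0 B = v" by (simp add: lin2_def)
  have D1: "((\<lambda>t. poly \<phi> t) has_field_derivative 0) (at 0)"
    using dirderiv[of 4 C, where P=v and Q=B and t=0] d0 by (simp add: \<phi>_def poly_fpoly v0)
  have p0: "poly \<phi> 0 = 0" using v(2) by (simp add: \<phi>_def poly_fpoly v0)
  obtain r1 where r1: "\<phi> = [:0,1:] * r1" using dvd_X[OF p0] by blast
  have "poly (pderiv \<phi>) 0 = 0" using DERIV_unique[OF D1 poly_DERIV] by simp
  then have "poly r1 0 = 0" by (simp add: r1 pderiv_mult pderiv_pCons)
  then obtain r2 where r2: "r1 = [:0,1:] * r2" using dvd_X by blast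
  have phinz: "\<phi> \<noteq> 0" using nz by (simp add: \<phi>_def)
  then have r2nz: "r2 \<noteq> 0" using r1 r2 by auto
  have "degree \<phi> = 2 + degree r2" using r2nz by (simp add: r1 r2 degree_mult_eq)
  then have dr2: "degree r2 \<le> 2" using degree_fpoly[of 4 C v B] by (simp add: \<phi>_def)
  have sub: "s ` ({..<4} - {k0}) \<subseteq> {x. poly r2 x = 0}"
  proof
    fix x assume "x \<in> s ` ({..<4} - {k0})"
    then obtain j where j: "j < 4" "j \<noteq> k0" "x = s j" by auto
    have "poly \<phi> (s j) = 0" using roots[OF j(1)] by (simp add: \<phi>_def)
    then show "x \<in> {x. poly r2 x = 0}" using sj[OF j(1,2)] j by (simp add: r1 r2)
  qed
  have "card (s ` ({..<4} - {k0})) = 3"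
    using k0(1) by (subst card_image) (auto intro: inj_on_subset[OF inj])
  moreover have "card (s ` ({..<4} - {k0})) \<le> card {x. poly r2 x = 0}"
    by (rule card_mono[OF poly_roots_finite[OF r2nz] sub])
  moreover have "card {x. poly r2 x = 0} \<le> degree r2" by (rule card_poly_roots_bound[OF r2nz])
  ultimately show False using dr2 by simp
  qed
qed


lemma ift:
  fixes f fb :: "complex \<Rightarrow> complex \<Rightarrow> complex"
  assumes fd: "\<And>a b. (f a has_field_derivative fb a b) (at b)"
    and fbc: "continuous_on UNIV (\<lambda>z. fb (fst z) (snd z))"
    and hol: "\<And>h. h holomorphic_on UNIV \<Longrightarrow> (\<lambda>a. f a (h a)) holomorphic_on UNIV"
    and f00: "f 0 0 = 0" and c0: "fb 0 0 \<noteq> 0"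
  obtains r \<rho> g where "r > 0" "\<rho> > 0" "g holomorphic_on ball 0 \<rho>"
    "\<And>a. a \<in> cball 0 \<rho> \<Longrightarrow> f a (g a) = 0 \<and> norm (g a) \<le> r" "g 0 = 0"
    "\<And>a b. a \<in> cball 0 \<rho> \<Longrightarrow> norm b \<le> r \<Longrightarrow> f a b = 0 \<Longrightarrow> b = g a"
proof -
  define c where "c = fb 0 0"
  have c: "c \<noteq> 0" using c0 by (simp add: c_def)
  define T where "T = (\<lambda>a b. b - f a b / c)"
  obtain \<delta> where \<delta>: "\<delta> > 0" "\<And>z. dist z (0,0) < \<delta> \<Longrightarrow> dist (fb (fst z) (snd z)) c < norm c / 2"
    using fbc c unfolding continuous_on_iff c_def
    by (metis UNIV_I divide_pos_pos fst_conv snd_conv zero_less_norm_iff zero_less_numeral)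
  define r where "r = \<delta> / 3"
  have r: "r > 0" using \<delta> by (simp add: r_def)
  have fbb: "norm (fb a b - c) \<le> norm c / 2" if "norm a \<le> r" "norm b \<le> r" for a b
  proof -
    have "dist (a,b) (0,0) = sqrt ((norm a)\<^sup>2 + (norm b)\<^sup>2)" by (simp add: dist_prod_def)
    also have "\<dots> \<le> norm a + norm b" by (rule sqrt_sum_squares_le_sum) auto
    also have "\<dots> < \<delta>" using that r_def \<delta> by simp
    finally show ?thesis using \<delta>(2)[of "(a,b)"] by (simp add: dist_norm)
  qed
  have Td: "(T a has_field_derivative (1 - fb a b / c)) (at b)" for a b
    unfolding T_def using c by (auto intro!: derivative_eq_intros fd)
  have Tl: "norm (T a x - T a y) \<le> 1/2 * norm (x - y)"
    if "norm a \<le> r" "norm x \<le> r" "norm y \<le> r" for a x y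
  proof (rule field_differentiable_bound[of "cball (0::complex) r"])
    show "(T a has_field_derivative (1 - fb a z / c)) (at z within cball 0 r)" for z
      using Td has_field_derivative_at_within by blast
    show "norm (1 - fb a z / c) \<le> 1/2" if "z \<in> cball 0 r" for z
    proof -
      have "1 - fb a z / c = (c - fb a z) / c" using c by (simp add: field_simps)
      then have "norm (1 - fb a z / c) = norm (fb a z - c) / norm c"
        by (simp add: norm_divide norm_minus_commute)
      also have "\<dots> \<le> (norm c / 2) / norm c"
        using fbb[of a z] \<open>norm a \<le> r\<close> that c by (intro divide_right_mono) auto
      finally show ?thesis using c by simp
    qed
  qed (use that convex_cball in auto)
  have cf0: "isCont (\<lambda>a. f a 0) 0"
    using hol[of "\<lambda>_. 0"] by (metis holomorphic_on_imp_continuous_on continuous_on_eq_continuous_at open_UNIV UNIV_I holomorphic_on_const)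
  obtain d where d: "d > 0" "\<And>a. norm a < d \<Longrightarrow> norm (f a 0) < norm c * r / 2"
  proof -
    have "norm c * r / 2 > 0" using c r by simp
    with cf0 obtain d where "d > 0" "\<And>a. dist a 0 < d \<Longrightarrow> dist (f a 0) (f 0 0) < norm c * r / 2"
      unfolding continuous_at_eps_delta by blast
    then show ?thesis using that f00 by (auto simp: dist_norm)
  qed
  define \<rho> where "\<rho> = min r (d/2)"
  have \<rho>: "\<rho> > 0" using r d by (simp add: \<rho>_def)
  have T0: "norm (T a 0) \<le> r / 2" if "norm a \<le> \<rho>" for a
  proof -
    have "norm a < d" using that d \<rho>_def by auto
    then have "norm (f a 0) < norm c * r / 2" by (rule d(2))
    then have "norm (f a 0) / norm c \<le> r / 2" using c by (simp add: field_simps)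
    then show ?thesis by (simp add: T_def norm_divide)
  qed
  have Tin: "norm (T a b) \<le> r" if "norm a \<le> \<rho>" "norm b \<le> r" for a b
  proof -
    have ar: "norm a \<le> r" using that \<rho>_def by auto
    have "norm (T a b) \<le> norm (T a b - T a 0) + norm (T a 0)" using norm_triangle_ineq[of "T a b - T a 0" "T a 0"] by simp
    also have "\<dots> \<le> 1/2 * norm (b - 0) + r/2" using Tl[OF ar that(2), of 0] T0[OF that(1)] r by (intro add_mono) auto
    finally show ?thesis using that by simp
  qed
  define it where "it = (\<lambda>n. ((\<lambda>h a. T a (h a)) ^^ n) (\<lambda>_. 0))"
  have it0: "it 0 = (\<lambda>_. 0)" by (simp add: it_def)
  have itS: "it (Suc n) a = T a (it n a)" for n a by (simp add: it_def)
  have itr: "norm (it n a) \<le> r" if "norm a \<le> \<rho>" for n a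
    by (induction n) (use r that Tin in \<open>auto simp: it0 itS\<close>)
  have itd: "norm (it (Suc n) a - it n a) \<le> (1/2)^n * (r/2)" if "norm a \<le> \<rho>" for n a
  proof (induction n)
    case 0 then show ?case using T0[OF that] by (simp add: it0 itS)
  next
    case (Suc n)
    have ar: "norm a \<le> r" using that \<rho>_def by auto
    have "norm (it (Suc (Suc n)) a - it (Suc n) a) \<le> 1/2 * norm (it (Suc n) a - it n a)"
      using Tl[OF ar itr[OF that, of "Suc n"] itr[OF that, of n]] by (simp add: itS)
    also have "\<dots> \<le> 1/2 * ((1/2)^n * (r/2))" using Suc by simp
    finally show ?case by simp
  qed
  have itk: "norm (it (n + k) a - it n a) \<le> r * (1/2)^n" if "norm a \<le> \<rho>" for n k a
  proof -
    have "norm (it (n + k) a - it n a) \<le> r * (1/2)^n * (1 - (1/2)^k)"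
    proof (induction k)
      case 0 then show ?case by simp
    next
      case (Suc k)
      have "norm (it (n + Suc k) a - it n a) \<le> norm (it (Suc (n + k)) a - it (n+k) a) + norm (it (n + k) a - it n a)"
        using norm_triangle_ineq[of "it (Suc (n + k)) a - it (n+k) a" "it (n + k) a - it n a"] by simp
      also have "\<dots> \<le> (1/2)^(n+k) * (r/2) + r * (1/2)^n * (1 - (1/2)^k)"
        using itd[OF that, of "n+k"] Suc by simp
      also have "\<dots> = r * (1/2)^n * (1 - (1/2)^Suc k)" by (simp add: power_add field_simps)
      finally show ?case .
    qed
    also have "\<dots> \<le> r * (1/2)^n" using r by (simp add: mult_left_le)
    finally show ?thesis .
  qed
  have uc: "uniformly_Cauchy_on (cball 0 \<rho>) it"
  proof (rule uniformly_Cauchy_onI)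
    fix e :: real assume e: "e > 0"
    obtain M where M: "(1/2)^M < e / (2*r)"
      using real_arch_pow_inv[of "e/(2*r)" "1/2"] e r by auto
    show "\<exists>M. \<forall>x\<in>cball 0 \<rho>. \<forall>m\<ge>M. \<forall>n\<ge>M. dist (it m x) (it n x) < e"
    proof (intro exI ballI allI impI)
      fix x :: complex and m n :: nat assume x: "x \<in> cball 0 \<rho>" and m: "m \<ge> M" and n: "n \<ge> M"
      have xa: "norm x \<le> \<rho>" using x by simp
      have "dist (it m x) (it n x) \<le> norm (it m x - it M x) + norm (it n x - it M x)"
        by (simp add: dist_norm norm_triangle_sub[of "it m x - it M x" "it n x - it M x", simplified])
           (metis dist_norm dist_triangle2)
      also have "\<dots> \<le> r * (1/2)^M + r * (1/2)^M"
        using itk[OF xa, of M "m - M"] itk[OF xa, of M "n - M"] m n by (intro add_mono) auto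
      also have "\<dots> < e" using M r by (simp add: field_simps)
      finally show "dist (it m x) (it n x) < e" .
    qed
  qed
  then obtain g where g: "uniform_limit (cball 0 \<rho>) it g sequentially"
    using Cauchy_uniformly_convergent unfolding uniformly_convergent_on_def by blast
  have ithol: "it n holomorphic_on UNIV" for n
  proof (induction n)
    case 0 then show ?case by (simp add: it0)
  next
    case (Suc n)
    have "(\<lambda>a. it n a - f a (it n a) / c) holomorphic_on UNIV"
      using c by (intro holomorphic_intros hol Suc)
    then show ?case by (simp add: itS[abs_def] T_def)
  qed
  have "continuous_on (cball 0 \<rho>) g \<and> g holomorphic_on ball 0 \<rho>"
    by (rule holomorphic_uniform_limit[OF _ g])
       (auto intro!: always_eventually holomorphic_on_imp_continuous_on holomorphic_on_subset[OF ithol])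
  then have ghol: "g holomorphic_on ball 0 \<rho>" by blast
  have glim: "(\<lambda>n. it n a) \<longlonglongrightarrow> g a" if "a \<in> cball 0 \<rho>" for a
    by (rule tendsto_uniform_limitI[OF g that])
  have gr: "norm (g a) \<le> r" if "a \<in> cball 0 \<rho>" for a
    using glim[OF that] itr that by (intro Lim_norm_ubound[of sequentially]) auto
  have gfix: "f a (g a) = 0" if "a \<in> cball 0 \<rho>" for a
  proof -
    have "isCont (T a) (g a)" using Td DERIV_isCont by blast
    then have "(\<lambda>n. T a (it n a)) \<longlonglongrightarrow> T a (g a)" using glim[OF that] isCont_tendsto_compose by blast
    moreover have "(\<lambda>n. T a (it n a)) \<longlonglongrightarrow> g a"
      using glim[OF that] unfolding itS[symmetric] by (rule LIMSEQ_Suc)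
    ultimately have "T a (g a) = g a" using LIMSEQ_unique by blast
    then show ?thesis using c by (simp add: T_def)
  qed
  have guniq: "b = g a" if "a \<in> cball 0 \<rho>" "norm b \<le> r" "f a b = 0" for a b
  proof -
    have ar: "norm a \<le> r" using that \<rho>_def by auto
    have "T a b = b" "T a (g a) = g a" using that gfix by (auto simp: T_def)
    then have "norm (b - g a) \<le> 1/2 * norm (b - g a)" using Tl[OF ar that(2) gr[OF that(1)]] by simp
    then show ?thesis by simp
  qed
  have g0: "g 0 = 0" using guniq[of 0 0] f00 \<rho> r by simp
  show ?thesis
    by (rule that[OF r \<rho> ghol _ g0]) (use gfix gr guniq in auto)
qed


definition chart :: "cvec \<Rightarrow> cvec \<Rightarrow> cvec \<Rightarrow> complex \<Rightarrow> complex \<Rightarrow> cvec" where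
  "chart p u w a b = (c1 p + a * c1 u + b * c1 w, c2 p + a * c2 u + b * c2 w, c3 p + a * c3 u + b * c3 w)"

definition ev :: "nat \<Rightarrow> cvec" where
  "ev k = (if k = 1 then (1,0,0) else if k = 2 then (0,1,0) else (0,0,1))"

lemma dot_ev: "dot v (ev k) = sel k v"
  by (simp add: ev_def sel_def dot_def)

lemma dot_cross_self: "dot x (cross x y) = 0"
  by (simp add: dot_def cross_def algebra_simps)

lemma triple: "cross a (cross b c) = lin2 (dot a c) b (-(dot a b)) c"
  by (simp add: cross_def dot_def lin2_def algebra_simps)

lemma det3_cyc: "det3 p u w = dot w (cross p u)"
  by (simp add: det3_def dot_def cross_def algebra_simps)

lemma dot_comm: "dot x y = dot y x"
  by (simp add: dot_def algebra_simps)

lemma det3_chart: "det3 (chart p u w a b) u w = det3 p u w"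
  by (simp add: det3_def dot_def cross_def chart_def algebra_simps)

lemma det3_zvec: "det3 zvec u w = 0"
  by (simp add: det3_def dot_def zvec_def)

lemma chart_nonzero: "det3 p u w \<noteq> 0 \<Longrightarrow> chart p u w a b \<noteq> zvec"
  using det3_chart[of p u w a b] det3_zvec[of u w] by auto

lemma chart_00: "chart p u w 0 0 = p" by (simp add: chart_def)

lemma frame:
  assumes sm: "smooth_curve 4 C" and p: "p \<noteq> zvec" "feval 4 C p = 0"
  obtains u w where "dot (grad 4 C p) u = 0" "dot (grad 4 C p) w \<noteq> 0" "det3 p u w \<noteq> 0"
proof -
  define G where "G = grad 4 C p"
  have G: "G \<noteq> zvec" using smooth_grad[OF sm p] by (simp add: G_def)
  have Gp: "dot G p = 0" using euler[of 4 C p] p by (simp add: G_def)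
  obtain k where k: "sel k G \<noteq> 0" using sel_nonzero[OF G] by blast
  obtain j where j: "sel j p \<noteq> 0" using sel_nonzero[OF p(1)] by blast
  define u where "u = cross G (ev j)"
  define w where "w = ev k"
  have Gu: "dot G u = 0" by (simp add: u_def dot_cross_self)
  have Gw: "dot G w \<noteq> 0" using k by (simp add: w_def dot_ev)
  have "cross p u = lin2 (sel j p) G (- dot p G) (ev j)" by (simp add: u_def triple dot_ev)
  then have "det3 p u w = sel j p * dot w G"
    using Gp by (simp add: det3_cyc dot_lin2 dot_comm[of p G])
  then have "det3 p u w \<noteq> 0" using j Gw by (simp add: dot_comm)
  with Gu Gw show ?thesis using that by (simp add: G_def)
qed

lemma chart_deriv:
  assumes "(A has_field_derivative A') (at t within S)" "(B has_field_derivative B') (at t within S)"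
  shows "((\<lambda>t. feval 4 C (chart p u w (A t) (B t))) has_field_derivative
            dot (grad 4 C (chart p u w (A t) (B t))) (lin2 A' u B' w)) (at t within S)"
proof -
  have "((\<lambda>t. feval 4 C (c1 p + A t * c1 u + B t * c1 w, c2 p + A t * c2 u + B t * c2 w, c3 p + A t * c3 u + B t * c3 w))
        has_field_derivative
        dot (grad 4 C (c1 p + A t * c1 u + B t * c1 w, c2 p + A t * c2 u + B t * c2 w, c3 p + A t * c3 u + B t * c3 w))
          (A' * c1 u + B' * c1 w, A' * c2 u + B' * c2 w, A' * c3 u + B' * c3 w)) (at t within S)"
    by (rule feval_deriv) (auto intro!: derivative_eq_intros assms)
  then show ?thesis by (simp add: chart_def lin2_def)
qed

lemma local_chart:
  assumes sm: "smooth_curve 4 C" and p: "p \<noteq> zvec" "feval 4 C p = 0"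
    and u: "dot (grad 4 C p) u = 0" and w: "dot (grad 4 C p) w \<noteq> 0"
  obtains r \<rho> g where "r > 0" "\<rho> > 0" "g holomorphic_on ball 0 \<rho>"
    "\<And>a. a \<in> cball 0 \<rho> \<Longrightarrow> feval 4 C (chart p u w a (g a)) = 0 \<and> norm (g a) \<le> r" "g 0 = 0"
    "\<And>a b. a \<in> cball 0 \<rho> \<Longrightarrow> norm b \<le> r \<Longrightarrow> feval 4 C (chart p u w a b) = 0 \<Longrightarrow> b = g a"
proof (rule ift[of "\<lambda>a b. feval 4 C (chart p u w a b)" "\<lambda>a b. dot (grad 4 C (chart p u w a b)) w"])
  show "((\<lambda>b. feval 4 C (chart p u w a b)) has_field_derivative dot (grad 4 C (chart p u w a b)) w) (at b)" for a b
    using chart_deriv[of "\<lambda>_. a" 0 b UNIV "\<lambda>b. b" 1 C p u w]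
    by (auto intro!: derivative_eq_intros simp: lin2_def)
  show "continuous_on UNIV (\<lambda>z. dot (grad 4 C (chart p u w (fst z) (snd z))) w)"
    unfolding grad_def dot_def chart_def c123_simps
    by (intro continuous_intros feval_cont)
  show "(\<lambda>a. feval 4 C (chart p u w a (h a))) holomorphic_on UNIV" if "h holomorphic_on UNIV" for h
    unfolding chart_def by (intro holomorphic_intros that)
  show "feval 4 C (chart p u w 0 0) = 0" using p by (simp add: chart_00)
  show "dot (grad 4 C (chart p u w 0 0)) w \<noteq> 0" using w by (simp add: chart_00)
qed (use that in blast)


definition chart_data where
  "chart_data C p u w r \<rho> g \<longleftrightarrow> smooth_curve 4 C \<and> p \<noteq> zvec \<and> feval 4 C p = 0 \<and>
     dot (grad 4 C p) u = 0 \<and> dot (grad 4 C p) w \<noteq> 0 \<and> det3 p u w \<noteq> 0 \<and> r > 0 \<and> \<rho> > 0 \<and>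
     g holomorphic_on ball 0 \<rho> \<and> (\<forall>a\<in>cball 0 \<rho>. feval 4 C (chart p u w a (g a)) = 0 \<and> norm (g a) \<le> r) \<and>
     g 0 = 0 \<and> (\<forall>a b. a \<in> cball 0 \<rho> \<longrightarrow> norm b \<le> r \<longrightarrow> feval 4 C (chart p u w a b) = 0 \<longrightarrow> b = g a)"

lemma chart_data_exists:
  assumes sm: "smooth_curve 4 C" and p: "p \<noteq> zvec" "feval 4 C p = 0"
  shows "\<exists>u w r \<rho> g. chart_data C p u w r \<rho> g"
proof -
  obtain u w where uw: "dot (grad 4 C p) u = 0" "dot (grad 4 C p) w \<noteq> 0" "det3 p u w \<noteq> 0"
    using frame[OF sm p] by blast
  obtain r \<rho> g where "r > 0" "\<rho> > 0" "g holomorphic_on ball 0 \<rho>"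
    "\<And>a. a \<in> cball 0 \<rho> \<Longrightarrow> feval 4 C (chart p u w a (g a)) = 0 \<and> norm (g a) \<le> r" "g 0 = 0"
    "\<And>a b. a \<in> cball 0 \<rho> \<Longrightarrow> norm b \<le> r \<Longrightarrow> feval 4 C (chart p u w a b) = 0 \<Longrightarrow> b = g a"
    using local_chart[OF sm p uw(1,2)] by metis
  then have "chart_data C p u w r \<rho> g" using sm p uw by (simp add: chart_data_def)
  then show ?thesis by blast
qed

lemma c1_chart: "c1 (chart p u w a b) = c1 p + a * c1 u + b * c1 w" by (simp add: chart_def)
lemma c2_chart: "c2 (chart p u w a b) = c2 p + a * c2 u + b * c2 w" by (simp add: chart_def)
lemma c3_chart: "c3 (chart p u w a b) = c3 p + a * c3 u + b * c3 w" by (simp add: chart_def)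

lemma dot_cross_lin2: "dot w (cross p (lin2 1 u c w)) = dot w (cross p u)"
  by (simp add: dot_def cross_def lin2_def algebra_simps)

lemma gamma0_lp:
  assumes cd: "chart_data C p u w r \<rho> g"
  shows "local_param 4 C p (\<lambda>t. chart p u w t (g t))"
proof -
  from cd have ghol: "g holomorphic_on ball 0 \<rho>" and \<rho>: "\<rho> > 0" and g0: "g 0 = 0"
    and D: "det3 p u w \<noteq> 0"
    and on: "\<And>a. a \<in> cball 0 \<rho> \<Longrightarrow> feval 4 C (chart p u w a (g a)) = 0"
    by (auto simp: chart_data_def)
  have gd: "(g has_field_derivative deriv g 0) (at 0)"
    using holomorphic_derivI[OF ghol] \<rho> by simp
  have d1: "deriv (\<lambda>t. c1 (chart p u w t (g t))) 0 = c1 u + deriv g 0 * c1 w"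
    unfolding c1_chart by (rule DERIV_imp_deriv) (auto intro!: derivative_eq_intros gd)
  have d2: "deriv (\<lambda>t. c2 (chart p u w t (g t))) 0 = c2 u + deriv g 0 * c2 w"
    unfolding c2_chart by (rule DERIV_imp_deriv) (auto intro!: derivative_eq_intros gd)
  have d3: "deriv (\<lambda>t. c3 (chart p u w t (g t))) 0 = c3 u + deriv g 0 * c3 w"
    unfolding c3_chart by (rule DERIV_imp_deriv) (auto intro!: derivative_eq_intros gd)
  have "(c1 u + deriv g 0 * c1 w, c2 u + deriv g 0 * c2 w, c3 u + deriv g 0 * c3 w) = lin2 1 u (deriv g 0) w"
    by (simp add: lin2_def)
  moreover have "dot w (cross p (lin2 1 u (deriv g 0) w)) \<noteq> 0"
    using D by (simp add: dot_cross_lin2 det3_cyc)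
  ultimately have cr: "cross p (deriv (\<lambda>t. c1 (chart p u w t (g t))) 0, deriv (\<lambda>t. c2 (chart p u w t (g t))) 0,
        deriv (\<lambda>t. c3 (chart p u w t (g t))) 0) \<noteq> zvec"
    unfolding d1 d2 d3 by (auto simp: dot_def zvec_def)
  show ?thesis unfolding local_param_def
  proof (intro exI[of _ \<rho>] conjI ballI)
    show "(\<lambda>t. c1 (chart p u w t (g t))) holomorphic_on ball 0 \<rho>"
      unfolding c1_chart by (intro holomorphic_intros ghol)
    show "(\<lambda>t. c2 (chart p u w t (g t))) holomorphic_on ball 0 \<rho>"
      unfolding c2_chart by (intro holomorphic_intros ghol)
    show "(\<lambda>t. c3 (chart p u w t (g t))) holomorphic_on ball 0 \<rho>"
      unfolding c3_chart by (intro holomorphic_intros ghol)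
    show "chart p u w 0 (g 0) = p" by (simp add: g0 chart_00)
    fix t assume "t \<in> ball (0::complex) \<rho>"
    then show "chart p u w t (g t) \<noteq> zvec" "feval 4 C (chart p u w t (g t)) = 0"
      using chart_nonzero[OF D] on by auto
  qed (use \<rho> cr in auto)
qed


lemma cramer_id:
  "det3 p u w * c1 y = det3 y u w * c1 p + det3 p y w * c1 u + det3 p u y * c1 w"
  "det3 p u w * c2 y = det3 y u w * c2 p + det3 p y w * c2 u + det3 p u y * c2 w"
  "det3 p u w * c3 y = det3 y u w * c3 p + det3 p y w * c3 u + det3 p u y * c3 w"
  by (simp_all add: det3_def dot_def cross_def algebra_simps)

lemma cramer_aux:
  fixes D M N K y a b c :: complex
  assumes "D * y = M * a + N * b + K * c" "D \<noteq> 0" "M \<noteq> 0"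
  shows "y = M / D * (a + N / M * b + K / M * c)"
proof -
  have e: "y = (M * a + N * b + K * c) / D" using assms(1,2) by (simp add: field_simps)
  show ?thesis using assms(2,3) unfolding e by (simp add: field_simps)
qed

lemma cramer_chart:
  assumes "det3 y u w \<noteq> 0" and that: "det3 p u w \<noteq> 0"
  shows "y = smul (det3 y u w / det3 p u w) (chart p u w (det3 p y w / det3 y u w) (det3 p u y / det3 y u w))"
proof -
  have "c1 y = det3 y u w / det3 p u w * (c1 p + det3 p y w / det3 y u w * c1 u + det3 p u y / det3 y u w * c1 w)"
    by (rule cramer_aux[OF cramer_id(1)[of p u w y] that assms(1)])
  moreover have "c2 y = det3 y u w / det3 p u w * (c2 p + det3 p y w / det3 y u w * c2 u + det3 p u y / det3 y u w * c2 w)"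
    by (rule cramer_aux[OF cramer_id(2)[of p u w y] that assms(1)])
  moreover have "c3 y = det3 y u w / det3 p u w * (c3 p + det3 p y w / det3 y u w * c3 u + det3 p u y / det3 y u w * c3 w)"
    by (rule cramer_aux[OF cramer_id(3)[of p u w y] that assms(1)])
  ultimately show ?thesis unfolding smul_def chart_def c123_simps by (metis cvec_eta)
qed

lemma det3_lin: "det3 v u w = dot v (cross u w)" "det3 p v w = dot v (cross w p)" "det3 p u v = dot v (cross p u)"
  by (simp_all add: det3_def dot_def cross_def algebra_simps)

lemma det3_rep: "det3 p p w = 0" "det3 p u p = 0"
  by (simp_all add: det3_def dot_def cross_def algebra_simps)

lemma dot_deriv:
  assumes "(x has_field_derivative x') (at t)" "(y has_field_derivative y') (at t)" "(z has_field_derivative z') (at t)"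
  shows "((\<lambda>t. dot (x t, y t, z t) n) has_field_derivative dot (x', y', z') n) (at t)"
  unfolding dot_def using assms by (auto intro!: derivative_eq_intros)

lemma reparam:
  assumes cd: "chart_data C p u w r \<rho> g" and lp: "local_param 4 C p \<gamma>"
  obtains r2 \<mu> \<alpha> where "r2 > 0" "\<mu> holomorphic_on ball 0 r2" "\<alpha> holomorphic_on ball 0 r2"
    "\<And>t. t \<in> ball 0 r2 \<Longrightarrow> \<mu> t \<noteq> 0 \<and> \<alpha> t \<in> ball 0 \<rho> \<and> \<gamma> t = smul (\<mu> t) (chart p u w (\<alpha> t) (g (\<alpha> t)))"
    "\<alpha> 0 = 0" "deriv \<alpha> 0 \<noteq> 0"
proof -
  from cd have sm: "smooth_curve 4 C" and p: "p \<noteq> zvec" "feval 4 C p = 0"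
    and Gu: "dot (grad 4 C p) u = 0" and Gw: "dot (grad 4 C p) w \<noteq> 0" and D: "det3 p u w \<noteq> 0"
    and r: "r > 0" and \<rho>: "\<rho> > 0"
    and uniq: "\<And>a b. a \<in> cball 0 \<rho> \<Longrightarrow> norm b \<le> r \<Longrightarrow> feval 4 C (chart p u w a b) = 0 \<Longrightarrow> b = g a"
    by (auto simp: chart_data_def)
  from lp obtain r1 where r1: "r1 > 0" and hx: "(\<lambda>t. c1 (\<gamma> t)) holomorphic_on ball 0 r1"
    and hy: "(\<lambda>t. c2 (\<gamma> t)) holomorphic_on ball 0 r1" and hz: "(\<lambda>t. c3 (\<gamma> t)) holomorphic_on ball 0 r1"
    and g0: "\<gamma> 0 = p" and on: "\<And>t. t \<in> ball 0 r1 \<Longrightarrow> \<gamma> t \<noteq> zvec \<and> feval 4 C (\<gamma> t) = 0"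
    and cr: "cross p (deriv (\<lambda>t. c1 (\<gamma> t)) 0, deriv (\<lambda>t. c2 (\<gamma> t)) 0, deriv (\<lambda>t. c3 (\<gamma> t)) 0) \<noteq> zvec"
    unfolding local_param_def by blast
  define x where "x = (\<lambda>t. c1 (\<gamma> t))"
  define y where "y = (\<lambda>t. c2 (\<gamma> t))"
  define z where "z = (\<lambda>t. c3 (\<gamma> t))"
  have gxyz: "\<gamma> t = (x t, y t, z t)" for t by (simp add: x_def y_def z_def)
  have hx': "x holomorphic_on ball 0 r1" "y holomorphic_on ball 0 r1" "z holomorphic_on ball 0 r1"
    using hx hy hz by (simp_all add: x_def y_def z_def)
  have dx: "(x has_field_derivative deriv x 0) (at 0)" "(y has_field_derivative deriv y 0) (at 0)"
    "(z has_field_derivative deriv z 0) (at 0)"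
    using holomorphic_derivI[OF hx'(1)] holomorphic_derivI[OF hx'(2)] holomorphic_derivI[OF hx'(3)] r1 by auto
  define gp where "gp = (deriv x 0, deriv y 0, deriv z 0)"
  have crp: "cross p gp \<noteq> zvec" using cr by (simp add: gp_def x_def y_def z_def)
  define M where "M = (\<lambda>t. det3 (\<gamma> t) u w)"
  define N where "N = (\<lambda>t. det3 p (\<gamma> t) w)"
  define K where "K = (\<lambda>t. det3 p u (\<gamma> t))"
  have Mf: "M = (\<lambda>t. dot (x t, y t, z t) (cross u w))" unfolding M_def gxyz by (rule ext) (rule det3_lin(1))
  have Nf: "N = (\<lambda>t. dot (x t, y t, z t) (cross w p))" unfolding N_def gxyz by (rule ext) (rule det3_lin(2))
  have Kf: "K = (\<lambda>t. dot (x t, y t, z t) (cross p u))" unfolding K_def gxyz by (rule ext) (rule det3_lin(3))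
  have Mh: "M holomorphic_on ball 0 r1" unfolding Mf dot_def c123_simps by (intro holomorphic_intros hx')
  have Nh: "N holomorphic_on ball 0 r1" unfolding Nf dot_def c123_simps by (intro holomorphic_intros hx')
  have Kh: "K holomorphic_on ball 0 r1" unfolding Kf dot_def c123_simps by (intro holomorphic_intros hx')
  have M0: "M 0 = det3 p u w" by (simp add: M_def g0)
  have N0: "N 0 = 0" by (simp add: N_def g0 det3_rep)
  have K0: "K 0 = 0" by (simp add: K_def g0 det3_rep)
  have cont: "isCont f 0" if "f holomorphic_on ball 0 r1" for f
    using that r1 by (meson centre_in_ball continuous_on_eq_continuous_at holomorphic_on_imp_continuous_on open_ball)
  define \<alpha> where "\<alpha> = (\<lambda>t. N t / M t)"
  define \<beta> where "\<beta> = (\<lambda>t. K t / M t)"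
  define \<mu> where "\<mu> = (\<lambda>t. M t / det3 p u w)"
  have ca: "isCont \<alpha> 0" unfolding \<alpha>_def using cont[OF Nh] cont[OF Mh] M0 D by (intro continuous_intros) auto
  have cb: "isCont \<beta> 0" unfolding \<beta>_def using cont[OF Kh] cont[OF Mh] M0 D by (intro continuous_intros) auto
  have a0: "\<alpha> 0 = 0" by (simp add: \<alpha>_def N0)
  have b0: "\<beta> 0 = 0" by (simp add: \<beta>_def K0)
  have ev1: "eventually (\<lambda>t. M t \<noteq> 0) (nhds 0)"
  proof -
    have "(M \<longlongrightarrow> M 0) (nhds 0)" using cont[OF Mh] by (simp add: isCont_def tendsto_at_iff_tendsto_nhds)
    then show ?thesis using M0 D by (intro tendsto_imp_eventually_ne) auto
  qed
  have ev2: "eventually (\<lambda>t. norm (\<alpha> t) < \<rho>) (nhds 0)"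
  proof -
    have "(\<alpha> \<longlongrightarrow> \<alpha> 0) (nhds 0)" using ca by (simp add: isCont_def tendsto_at_iff_tendsto_nhds)
    then have "(\<alpha> \<longlongrightarrow> 0) (nhds 0)" using a0 by simp
    then have "((\<lambda>t. norm (\<alpha> t)) \<longlongrightarrow> 0) (nhds 0)" using tendsto_norm_zero by blast
    then show ?thesis using \<rho> by (rule order_tendstoD)
  qed
  have ev3: "eventually (\<lambda>t. norm (\<beta> t) < r) (nhds 0)"
  proof -
    have "(\<beta> \<longlongrightarrow> \<beta> 0) (nhds 0)" using cb by (simp add: isCont_def tendsto_at_iff_tendsto_nhds)
    then have "(\<beta> \<longlongrightarrow> 0) (nhds 0)" using b0 by simp
    then have "((\<lambda>t. norm (\<beta> t)) \<longlongrightarrow> 0) (nhds 0)" using tendsto_norm_zero by blast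
    then show ?thesis using r by (rule order_tendstoD)
  qed
  have ev4: "eventually (\<lambda>t. t \<in> ball 0 r1) (nhds (0::complex))"
    using r1 by (intro eventually_nhds_in_open) auto
  have "eventually (\<lambda>t. M t \<noteq> 0 \<and> norm (\<alpha> t) < \<rho> \<and> norm (\<beta> t) < r \<and> t \<in> ball 0 r1) (nhds 0)"
    using ev1 ev2 ev3 ev4 by eventually_elim auto
  then obtain r2 where r2: "r2 > 0" and
    P: "\<And>t. dist t 0 < r2 \<Longrightarrow> M t \<noteq> 0 \<and> norm (\<alpha> t) < \<rho> \<and> norm (\<beta> t) < r \<and> t \<in> ball 0 r1"
    unfolding eventually_nhds_metric by blast
  have P': "M t \<noteq> 0" "norm (\<alpha> t) < \<rho>" "norm (\<beta> t) < r" "t \<in> ball 0 r1" if "t \<in> ball 0 r2" for t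
    using P[of t] that by (auto simp: dist_norm)
  have sub: "ball 0 r2 \<subseteq> ball (0::complex) r1" using P' by auto
  have rep: "\<gamma> t = smul (\<mu> t) (chart p u w (\<alpha> t) (\<beta> t))" if "t \<in> ball 0 r2" for t
    using cramer_chart[of "\<gamma> t" u w p] P'(1)[OF that] D
    by (simp add: \<mu>_def \<alpha>_def \<beta>_def M_def N_def K_def)
  have key: "\<mu> t \<noteq> 0 \<and> \<alpha> t \<in> ball 0 \<rho> \<and> \<gamma> t = smul (\<mu> t) (chart p u w (\<alpha> t) (g (\<alpha> t)))"
    if t: "t \<in> ball 0 r2" for t
  proof -
    have mu: "\<mu> t \<noteq> 0" using P'(1)[OF t] D by (simp add: \<mu>_def)
    have "feval 4 C (\<gamma> t) = 0" using on P'(4)[OF t] by blast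
    then have "feval 4 C (chart p u w (\<alpha> t) (\<beta> t)) = 0" using rep[OF t] mu by (simp add: feval_smul)
    then have "\<beta> t = g (\<alpha> t)" using uniq[of "\<alpha> t" "\<beta> t"] P'(2,3)[OF t] by auto
    then show ?thesis using mu rep[OF t] P'(2)[OF t] by auto
  qed
  have muh: "\<mu> holomorphic_on ball 0 r2" unfolding \<mu>_def
    using D by (intro holomorphic_intros holomorphic_on_subset[OF Mh sub])
  have alh: "\<alpha> holomorphic_on ball 0 r2" unfolding \<alpha>_def
    using P' by (intro holomorphic_intros holomorphic_on_subset[OF Mh sub] holomorphic_on_subset[OF Nh sub]) auto
  have Md: "(M has_field_derivative dot gp (cross u w)) (at 0)" unfolding Mf gp_def by (rule dot_deriv[OF dx])
  have Nd: "(N has_field_derivative dot gp (cross w p)) (at 0)" unfolding Nf gp_def by (rule dot_deriv[OF dx])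
  have ad: "(\<alpha> has_field_derivative dot gp (cross w p) / det3 p u w) (at 0)"
    unfolding \<alpha>_def using Md Nd M0 N0 D
    by (auto intro!: derivative_eq_intros simp: power2_eq_square)
  have tang: "dot (grad 4 C p) gp = 0"
  proof -
    have d1: "((\<lambda>t. feval 4 C (x t, y t, z t)) has_field_derivative dot (grad 4 C (x 0, y 0, z 0)) gp) (at 0)"
      unfolding gp_def by (rule feval_deriv[OF _ dx]) auto
    have "((\<lambda>t. feval 4 C (x t, y t, z t)) has_field_derivative 0) (at 0)"
      by (rule has_field_derivative_transform_within_open[OF DERIV_const, of "ball 0 r1"])
         (use r1 on in \<open>auto simp: gxyz[symmetric]\<close>)
    with d1 have "dot (grad 4 C (x 0, y 0, z 0)) gp = 0" using DERIV_unique by blast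
    then show ?thesis using g0 by (simp add: gxyz[symmetric])
  qed
  have nd: "det3 p gp w \<noteq> 0"
  proof
    assume h: "det3 p gp w = 0"
    define G where "G = grad 4 C p"
    have Gp: "dot G p = 0" using euler[of 4 C p] p by (simp add: G_def)
    have "dot G (smul (det3 p u w) gp) = det3 gp u w * dot G p + det3 p gp w * dot G u + det3 p u gp * dot G w"
      using cramer_id[of p u w gp] by (simp add: dot_def smul_def algebra_simps)
    then have "det3 p u gp * dot G w = 0" using Gp Gu tang h by (simp add: G_def dot_smul)
    then have h2: "det3 p u gp = 0" using Gw by (simp add: G_def)
    have "gp = smul (det3 gp u w / det3 p u w) p"
      using cramer_id[of p u w gp] h h2 D by (cases gp) (simp add: smul_def field_simps)
    then have "cross p gp = zvec" by (metis cross_smul_right cross_self smul_zvec_iff)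
    with crp show False by simp
  qed
  have "deriv \<alpha> 0 = dot gp (cross w p) / det3 p u w" by (rule DERIV_imp_deriv[OF ad])
  moreover have "dot gp (cross w p) = det3 p gp w" by (rule det3_lin(2)[symmetric])
  ultimately have dn: "deriv \<alpha> 0 \<noteq> 0" using nd D by simp
  show ?thesis using that[OF r2 muh alh key a0 dn] by blast
qed


lemma eventually_ball_at: "r > 0 \<Longrightarrow> eventually (\<lambda>t. t \<in> ball (0::complex) r) (at 0)"
  by (rule eventually_at_in_open') auto

lemma h_holo:
  assumes cd: "chart_data C p u w r \<rho> g"
  shows "(\<lambda>s. feval e G (chart p u w s (g s))) holomorphic_on ball 0 \<rho>"
proof -
  have ghol: "g holomorphic_on ball 0 \<rho>" using cd by (simp add: chart_data_def)
  have "(\<lambda>s. feval e G (c1 (chart p u w s (g s)), c2 (chart p u w s (g s)), c3 (chart p u w s (g s))))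
        holomorphic_on ball 0 \<rho>"
    unfolding c1_chart c2_chart c3_chart by (intro feval_holo holomorphic_intros ghol)
  then show ?thesis by simp
qed

lemma zorder_reparam:
  assumes cd: "chart_data C p u w r \<rho> g" and lp: "local_param 4 C p \<gamma>"
    and ev: "eventually (\<lambda>t. feval e G (chart p u w t (g t)) \<noteq> 0) (at 0)"
  shows "zorder (\<lambda>t. feval e G (\<gamma> t)) 0 = zorder (\<lambda>t. feval e G (chart p u w t (g t))) 0"
proof -
  define h where "h = (\<lambda>s. feval e G (chart p u w s (g s)))"
  have \<rho>: "\<rho> > 0" using cd by (simp add: chart_data_def)
  have hh: "h holomorphic_on ball 0 \<rho>" unfolding h_def by (rule h_holo[OF cd])
  obtain r2 \<mu> \<alpha> where r2: "r2 > 0" and muh: "\<mu> holomorphic_on ball 0 r2" and alh: "\<alpha> holomorphic_on ball 0 r2"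
    and key: "\<And>t. t \<in> ball 0 r2 \<Longrightarrow> \<mu> t \<noteq> 0 \<and> \<alpha> t \<in> ball 0 \<rho> \<and> \<gamma> t = smul (\<mu> t) (chart p u w (\<alpha> t) (g (\<alpha> t)))"
    and a0: "\<alpha> 0 = 0" and da: "deriv \<alpha> 0 \<noteq> 0"
    using reparam[OF cd lp] by metis
  have eq: "feval e G (\<gamma> t) = \<mu> t ^ e * h (\<alpha> t)" if "t \<in> ball 0 r2" for t
    using key[OF that] by (simp add: feval_smul h_def)
  have z1: "zorder (\<lambda>t. feval e G (\<gamma> t)) 0 = zorder (\<lambda>t. \<mu> t ^ e * h (\<alpha> t)) 0"
    by (rule zorder_cong) (use eventually_ball_at[OF r2] eq in \<open>auto elim: eventually_mono\<close>)
  have mua: "(\<lambda>t. \<mu> t ^ e) analytic_on {0}"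
    using r2 by (intro holomorphic_on_imp_analytic_at[of _ "ball 0 r2"] holomorphic_intros muh) auto
  have sub: "\<alpha> ` ball 0 r2 \<subseteq> ball 0 \<rho>" using key by auto
  have hah: "(\<lambda>t. h (\<alpha> t)) holomorphic_on ball 0 r2"
    using holomorphic_on_compose[OF alh holomorphic_on_subset[OF hh sub]] by (simp add: o_def)
  have ha: "(\<lambda>t. h (\<alpha> t)) analytic_on {0}"
    using r2 by (intro holomorphic_on_imp_analytic_at[OF hah]) auto
  have aa: "\<alpha> analytic_on {0}" using r2 by (intro holomorphic_on_imp_analytic_at[OF alh]) auto
  have ad: "(\<alpha> has_field_derivative deriv \<alpha> 0) (at 0)"
    using holomorphic_derivI[OF alh] r2 by auto
  have evn: "eventually (\<lambda>t. \<alpha> t \<noteq> 0) (at 0)"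
  proof -
    have "((\<lambda>y. (\<alpha> y - \<alpha> 0) / (y - 0)) \<longlongrightarrow> deriv \<alpha> 0) (at 0)"
      using ad by (simp add: has_field_derivative_iff)
    then have "eventually (\<lambda>y. (\<alpha> y - \<alpha> 0) / (y - 0) \<noteq> 0) (at 0)"
      using da by (rule tendsto_imp_eventually_ne)
    then show ?thesis by (rule eventually_mono) (auto simp: a0)
  qed
  have atend: "(\<alpha> \<longlongrightarrow> 0) (at 0)"
  proof -
    have "isCont \<alpha> 0" using ad by (rule DERIV_isCont)
    then show ?thesis using a0 by (simp add: isCont_def)
  qed
  have flim: "filterlim \<alpha> (at 0) (at 0)" by (rule filterlim_atI[OF atend evn])
  have evh: "eventually (\<lambda>t. h (\<alpha> t) \<noteq> 0) (at 0)"
    using eventually_compose_filterlim[OF ev[folded h_def] flim] by (simp add: h_def)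
  have evp: "eventually (\<lambda>t. \<mu> t ^ e * h (\<alpha> t) \<noteq> 0) (at 0)"
    using evh eventually_ball_at[OF r2] by eventually_elim (use key in auto)
  have z2: "zorder (\<lambda>t. \<mu> t ^ e * h (\<alpha> t)) 0 = zorder (\<lambda>t. \<mu> t ^ e) 0 + zorder (\<lambda>t. h (\<alpha> t)) 0"
    by (rule zorder_times_analytic[OF mua ha evp])
  have z3: "zorder (\<lambda>t. \<mu> t ^ e) 0 = 0"
    by (rule zorder_eq_0I[OF mua]) (use key r2 in auto)
  have hA: "h analytic_on {0}" using \<rho> by (intro holomorphic_on_imp_analytic_at[OF hh]) auto
  have z4: "zorder (h \<circ> \<alpha>) 0 = zorder h (\<alpha> 0) * zorder (\<lambda>x. \<alpha> x - \<alpha> 0) 0"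
    by (rule zorder_compose') (use a0 isolated_singularity_at_analytic[OF hA] not_essential_analytic[OF hA] aa ev[folded h_def] evn in \<open>auto simp: h_def\<close>)
  have z5: "zorder (\<lambda>x. \<alpha> x - \<alpha> 0) 0 = 1"
  proof -
    have "zorder \<alpha> 0 = 1"
      by (rule zorder_zero_eqI'[OF aa]) (use a0 da in auto)
    then show ?thesis using a0 by simp
  qed
  show ?thesis using z1 z2 z3 z4 z5 a0 by (simp add: o_def h_def)
qed

lemma curve_ord_eq:
  assumes cd: "chart_data C p u w r \<rho> g"
    and ev: "eventually (\<lambda>t. feval e G (chart p u w t (g t)) \<noteq> 0) (at 0)"
  shows "curve_ord 4 C e G p = zorder (\<lambda>t. feval e G (chart p u w t (g t))) 0"
  unfolding curve_ord_def
proof (rule the_equality)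
  show "\<forall>\<gamma>. local_param 4 C p \<gamma> \<longrightarrow> zorder (\<lambda>t. feval e G (\<gamma> t)) 0 = zorder (\<lambda>t. feval e G (chart p u w t (g t))) 0"
    using zorder_reparam[OF cd _ ev] by blast
  fix n assume "\<forall>\<gamma>. local_param 4 C p \<gamma> \<longrightarrow> zorder (\<lambda>t. feval e G (\<gamma> t)) 0 = n"
  then show "n = zorder (\<lambda>t. feval e G (chart p u w t (g t))) 0"
    using gamma0_lp[OF cd] by auto
qed


definition madd :: "nat \<times> nat \<times> nat \<Rightarrow> nat \<times> nat \<times> nat \<Rightarrow> nat \<times> nat \<times> nat" where
  "madd m m' = (fst m + fst m', fst (snd m) + fst (snd m'), snd (snd m) + snd (snd m'))"

definition fmul :: "nat \<Rightarrow> form \<Rightarrow> nat \<Rightarrow> form \<Rightarrow> form" where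
  "fmul d1 F d2 G = (\<lambda>m. \<Sum>m1\<in>monoms d1. \<Sum>m2\<in>monoms d2. if madd m1 m2 = m then F m1 * G m2 else 0)"

lemma mon_madd: "mon v (madd m1 m2) = mon v m1 * mon v m2"
  by (simp add: mon_def madd_def power_add algebra_simps)

lemma madd_monoms: "m1 \<in> monoms d1 \<Longrightarrow> m2 \<in> monoms d2 \<Longrightarrow> madd m1 m2 \<in> monoms (d1 + d2)"
  by (simp add: monoms_def madd_def)

lemma feval_fmul: "feval (d1 + d2) (fmul d1 F d2 G) v = feval d1 F v * feval d2 G v"
proof -
  have "feval (d1 + d2) (fmul d1 F d2 G) v =
        (\<Sum>m\<in>monoms (d1+d2). \<Sum>m1\<in>monoms d1. \<Sum>m2\<in>monoms d2. (if madd m1 m2 = m then F m1 * G m2 else 0) * mon v m)"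
    unfolding feval_mon fmul_def by (simp add: sum_distrib_right)
  also have "\<dots> = (\<Sum>m1\<in>monoms d1. \<Sum>m2\<in>monoms d2. \<Sum>m\<in>monoms (d1+d2). (if madd m1 m2 = m then F m1 * G m2 else 0) * mon v m)"
    by (subst sum.swap) (subst (2) sum.swap, rule refl)
  also have "\<dots> = (\<Sum>m1\<in>monoms d1. \<Sum>m2\<in>monoms d2. F m1 * G m2 * mon v (madd m1 m2))"
  proof (intro sum.cong refl)
    fix m1 m2 assume "m1 \<in> monoms d1" "m2 \<in> monoms d2"
    then have "madd m1 m2 \<in> monoms (d1+d2)" by (rule madd_monoms)
    then show "(\<Sum>m\<in>monoms (d1+d2). (if madd m1 m2 = m then F m1 * G m2 else 0) * mon v m) = F m1 * G m2 * mon v (madd m1 m2)"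
      by (simp add: if_distrib[of "\<lambda>x. x * _"] cong: if_cong)
  qed
  also have "\<dots> = (\<Sum>m1\<in>monoms d1. F m1 * mon v m1) * (\<Sum>m2\<in>monoms d2. G m2 * mon v m2)"
    by (simp add: mon_madd sum_product algebra_simps)
  finally show ?thesis by (simp add: feval_mon)
qed

lemma hom_fmul: "hom_form (d1 + d2) (fmul d1 F d2 G)"
  unfolding hom_form_def
proof (intro allI impI, rule ccontr)
  fix m assume nz: "fmul d1 F d2 G m \<noteq> 0" and nm: "m \<notin> monoms (d1 + d2)"
  have "fmul d1 F d2 G m = 0" unfolding fmul_def
  proof (intro sum.neutral ballI)
    fix m1 m2 assume "m1 \<in> monoms d1" "m2 \<in> monoms d2"
    then have "madd m1 m2 \<noteq> m" using madd_monoms nm by metis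
    then show "(if madd m1 m2 = m then F m1 * G m2 else 0) = 0" by simp
  qed
  with nz show False by simp
qed

definition lform :: "cvec \<Rightarrow> form" where
  "lform l = (\<lambda>m. if m = (1,0,0) then c1 l else if m = (0,1,0) then c2 l else if m = (0,0,1) then c3 l else 0)"

lemma monoms1: "monoms 1 = {(1,0,0),(0,1,0),(0,0,1)}"
proof (rule set_eqI)
  fix m :: "nat \<times> nat \<times> nat"
  obtain a b c where m: "m = (a,b,c)" by (cases m) auto
  show "m \<in> monoms 1 \<longleftrightarrow> m \<in> {(1,0,0),(0,1,0),(0,0,1)}"
    unfolding m monoms_def by (cases a; cases b; cases c) auto
qed

lemma feval_lform: "feval 1 (lform l) v = dot l v"
  unfolding feval_def monoms1 by (simp add: lform_def dot_def)

lemma hom_lform: "hom_form 1 (lform l)"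
  unfolding hom_form_def monoms1 by (simp add: lform_def)

lemma xform_lform: "xform = lform (1,0,0)"
  by (simp add: xform_def lform_def fun_eq_iff)

definition form3 :: "cvec \<Rightarrow> cvec \<Rightarrow> cvec \<Rightarrow> form" where
  "form3 a b c = fmul 1 (lform a) 2 (fmul 1 (lform b) 1 (lform c))"

lemma n12: "(1::nat) + 2 = 3" by simp
lemma n11: "(1::nat) + 1 = 2" by simp

lemma feval_form3: "feval 3 (form3 a b c) v = dot a v * (dot b v * dot c v)"
proof -
  have e1: "feval 3 (form3 a b c) v = feval 1 (lform a) v * feval 2 (fmul 1 (lform b) 1 (lform c)) v"
    using feval_fmul[of 1 2 "lform a" "fmul 1 (lform b) 1 (lform c)" v, unfolded n12] by (simp only: form3_def)
  have e2: "feval 2 (fmul 1 (lform b) 1 (lform c)) v = feval 1 (lform b) v * feval 1 (lform c) v"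
    using feval_fmul[of 1 1 "lform b" "lform c" v, unfolded n11] .
  show ?thesis unfolding e1 e2 feval_lform ..
qed

lemma hom_form3: "hom_form 3 (form3 a b c)"
  using hom_fmul[of 1 2 "lform a" "fmul 1 (lform b) 1 (lform c)", unfolded n12] by (simp only: form3_def)


lemma finite_avoid: "finite S \<Longrightarrow> eventually (\<lambda>t. t \<notin> S) (at (0::complex))"
proof -
  assume fS: "finite S"
  have "open (- (S - {0}))" using fS by (intro open_Compl finite_imp_closed) auto
  then have "eventually (\<lambda>t. t \<in> - (S - {0})) (at (0::complex))"
    by (rule eventually_at_in_open') auto
  moreover have "eventually (\<lambda>t. t \<noteq> 0) (at (0::complex))" by (rule eventually_at_filter[THEN iffD2]) simp
  ultimately show ?thesis by eventually_elim auto
qed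

lemma line_curve_finite:
  assumes sm: "smooth_curve 4 C" and l: "l \<noteq> zvec" and p: "p \<noteq> zvec" "feval 4 C p = 0" "dot l p = 0"
  obtains B \<phi> where "\<phi> \<noteq> 0"
    "\<And>P. P \<noteq> zvec \<Longrightarrow> feval 4 C P = 0 \<Longrightarrow> dot l P = 0 \<Longrightarrow> \<exists>a s. a \<noteq> 0 \<and> poly \<phi> s = 0 \<and> P = smul a (lin2 1 p s B)"
proof -
  obtain j where j: "sel j p \<noteq> 0" using sel_nonzero[OF p(1)] by blast
  define q where "q = cross l (ev j)"
  have lq: "dot l q = 0" by (simp add: q_def dot_cross_self)
  have "cross p q = lin2 (sel j p) l (- dot p l) (ev j)" by (simp add: q_def triple dot_ev)
  also have "\<dots> = smul (sel j p) l" using p(3) by (simp add: dot_comm[of p l] lin2_def smul_def)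
  finally have pq: "cross p q \<noteq> zvec" using j l by (simp add: smul_zvec_iff)
  obtain \<alpha> \<beta> where B: "feval 4 C (lin2 \<alpha> p \<beta> q) \<noteq> 0"
    using no_line_in_curve[OF sm pq] by auto
  define B where "B = lin2 \<alpha> p \<beta> q"
  have lB: "dot l B = 0" using p(3) lq by (simp add: B_def dot_lin2)
  have CB: "feval 4 C B \<noteq> 0" using B by (simp add: B_def)
  have pB: "cross p B \<noteq> zvec"
  proof
    assume "cross p B = zvec"
    then obtain c where "B = smul c p" using cross_zero_smul[OF p(1)] by blast
    with CB p(2) show False by (simp add: feval_smul)
  qed
  have nz: "fpoly 4 C p B \<noteq> 0"
  proof
    assume z: "fpoly 4 C p B = 0"
    have "poly (fpoly 4 C B p) t = 0" if "t \<noteq> 0" for t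
    proof -
      have "lin2 1 B t p = smul t (lin2 1 p (1/t) B)" using that by (simp add: lin2_def smul_def field_simps)
      then have "poly (fpoly 4 C B p) t = t^4 * poly (fpoly 4 C p B) (1/t)"
        by (simp add: poly_fpoly feval_smul)
      then show ?thesis using z by simp
    qed
    then have "{t. t \<noteq> 0} \<subseteq> {t. poly (fpoly 4 C B p) t = 0}" by auto
    moreover have "infinite {t::complex. t \<noteq> 0}"
    proof -
      have "{t::complex. t \<noteq> 0} = UNIV - {0}" by auto
      then show ?thesis by (simp add: infinite_UNIV_char_0)
    qed
    ultimately have "infinite {t. poly (fpoly 4 C B p) t = 0}" using finite_subset by blast
    then have "fpoly 4 C B p = 0" using poly_roots_finite by blast
    then have "poly (fpoly 4 C B p) 0 = 0" by simp
    moreover have "lin2 1 B 0 p = B" by (simp add: lin2_def)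
    ultimately show False using CB by (simp add: poly_fpoly)
  qed
  have rep: "\<exists>a s. a \<noteq> 0 \<and> poly (fpoly 4 C p B) s = 0 \<and> P = smul a (lin2 1 p s B)"
    if P: "P \<noteq> zvec" "feval 4 C P = 0" "dot l P = 0" for P
  proof -
    have "cross P B \<noteq> zvec"
    proof
      assume "cross P B = zvec"
      then have "cross B P = zvec" using cross_anti by blast
      moreover have "B \<noteq> zvec" using CB feval_zvec[of 4 C] by auto
      ultimately obtain c where "P = smul c B" using cross_zero_smul by blast
      with CB P show False by (auto simp: feval_smul smul_zvec_iff)
    qed
    then obtain a s where as: "a \<noteq> 0" "P = smul a (lin2 1 p s B)"
      using param_plane[OF l p(3) lB P(3) pB] by blast
    then have "poly (fpoly 4 C p B) s = 0" using P(2) by (simp add: poly_fpoly feval_smul)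
    with as show ?thesis by blast
  qed
  show ?thesis by (rule that[OF nz rep])
qed

lemma det3_chart_mid: "det3 p (chart p u w t b) w = t * det3 p u w"
  by (simp add: det3_def dot_def cross_def chart_def algebra_simps)

lemma det3_smul1: "det3 (smul c x) u w = c * det3 x u w"
  by (simp add: det3_def dot_def smul_def algebra_simps)
lemma det3_smul2: "det3 p (smul c x) w = c * det3 p x w"
  by (simp add: det3_def dot_def cross_def smul_def algebra_simps)

lemma chart_inj:
  assumes D: "det3 p u w \<noteq> 0" and e: "chart p u w t b = smul c (chart p u w t' b')"
  shows "t = t'"
proof -
  have "det3 p u w = c * det3 p u w" using arg_cong[OF e, of "\<lambda>x. det3 x u w"] by (simp add: det3_chart det3_smul1)
  then have c: "c = 1" using D by simp
  have "t * det3 p u w = c * (t' * det3 p u w)" using arg_cong[OF e, of "\<lambda>x. det3 p x w"]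
    by (simp add: det3_chart_mid det3_smul2)
  then show ?thesis using c D by simp
qed

lemma ev_lin_nonzero:
  assumes cd: "chart_data C p u w r \<rho> g" and l: "l \<noteq> zvec"
  shows "eventually (\<lambda>t. dot l (chart p u w t (g t)) \<noteq> 0) (at 0)"
proof -
  from cd have sm: "smooth_curve 4 C" and p: "p \<noteq> zvec" "feval 4 C p = 0" and D: "det3 p u w \<noteq> 0"
    and \<rho>: "\<rho> > 0" and g0: "g 0 = 0" and ghol: "g holomorphic_on ball 0 \<rho>"
    and on: "\<And>a. a \<in> cball 0 \<rho> \<Longrightarrow> feval 4 C (chart p u w a (g a)) = 0"
    by (auto simp: chart_data_def)
  show ?thesis
  proof (cases "dot l p = 0")
    case False
    have "(\<lambda>t. dot l (chart p u w t (g t))) holomorphic_on ball 0 \<rho>"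
      unfolding dot_def c1_chart c2_chart c3_chart by (intro holomorphic_intros ghol)
    then have "isCont (\<lambda>t. dot l (chart p u w t (g t))) 0"
      using \<rho> by (meson centre_in_ball continuous_on_eq_continuous_at holomorphic_on_imp_continuous_on open_ball)
    then have "((\<lambda>t. dot l (chart p u w t (g t))) \<longlongrightarrow> dot l p) (at 0)"
      by (simp add: isCont_def g0 chart_00)
    then show ?thesis using False by (rule tendsto_imp_eventually_ne)
  next
    case True
    obtain B \<phi> where nz: "\<phi> \<noteq> 0" and rep: "\<And>P. P \<noteq> zvec \<Longrightarrow> feval 4 C P = 0 \<Longrightarrow> dot l P = 0 \<Longrightarrow>
        \<exists>a s. a \<noteq> 0 \<and> poly \<phi> s = 0 \<and> P = smul a (lin2 1 p s B)"
      using line_curve_finite[OF sm l p True] by metis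
    define S where "S = {t \<in> ball 0 \<rho>. dot l (chart p u w t (g t)) = 0}"
    have "\<forall>t\<in>S. \<exists>a s. a \<noteq> 0 \<and> poly \<phi> s = 0 \<and> chart p u w t (g t) = smul a (lin2 1 p s B)"
      unfolding S_def using rep chart_nonzero[OF D] on by auto
    then obtain A \<sigma> where As: "\<And>t. t \<in> S \<Longrightarrow> A t \<noteq> 0 \<and> poly \<phi> (\<sigma> t) = 0 \<and> chart p u w t (g t) = smul (A t) (lin2 1 p (\<sigma> t) B)"
      by metis
    have inj: "inj_on \<sigma> S"
    proof (rule inj_onI)
      fix t t' assume t: "t \<in> S" and t': "t' \<in> S" and e: "\<sigma> t = \<sigma> t'"
      have "chart p u w t (g t) = smul (A t / A t') (chart p u w t' (g t'))"
        using As[OF t] As[OF t'] e by (simp add: smul_def)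
      then show "t = t'" by (rule chart_inj[OF D])
    qed
    have "\<sigma> ` S \<subseteq> {s. poly \<phi> s = 0}" using As by auto
    then have "finite (\<sigma> ` S)" using poly_roots_finite[OF nz] finite_subset by blast
    then have fS: "finite S" using inj finite_image_iff by blast
    have "eventually (\<lambda>t. t \<in> ball 0 \<rho>) (at (0::complex))" by (rule eventually_ball_at[OF \<rho>])
    then show ?thesis using finite_avoid[OF fS] by eventually_elim (auto simp: S_def)
  qed
qed


definition zl :: "cvec \<Rightarrow> cvec \<Rightarrow> cvec \<Rightarrow> (complex \<Rightarrow> complex) \<Rightarrow> cvec \<Rightarrow> int" where
  "zl p u w g l = zorder (\<lambda>t. dot l (chart p u w t (g t))) 0"

lemma lin_holo:
  assumes cd: "chart_data C p u w r \<rho> g"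
  shows "(\<lambda>t. dot l (chart p u w t (g t))) holomorphic_on ball 0 \<rho>"
proof -
  have ghol: "g holomorphic_on ball 0 \<rho>" using cd by (simp add: chart_data_def)
  show ?thesis unfolding dot_def c1_chart c2_chart c3_chart by (intro holomorphic_intros ghol)
qed

lemma lin_analytic:
  assumes cd: "chart_data C p u w r \<rho> g"
  shows "(\<lambda>t. dot l (chart p u w t (g t))) analytic_on {0}"
proof -
  have "\<rho> > 0" using cd by (simp add: chart_data_def)
  then show ?thesis by (intro holomorphic_on_imp_analytic_at[OF lin_holo[OF cd]]) auto
qed


lemma gamma0_tangent:
  assumes cd: "chart_data C p u w r \<rho> g"
  shows "dot (grad 4 C p) (lin2 1 u (deriv g 0) w) = 0" "cross p (lin2 1 u (deriv g 0) w) \<noteq> zvec"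
proof -
  from cd have \<rho>: "\<rho> > 0" and g0: "g 0 = 0" and ghol: "g holomorphic_on ball 0 \<rho>" and D: "det3 p u w \<noteq> 0"
    and on: "\<And>a. a \<in> cball 0 \<rho> \<Longrightarrow> feval 4 C (chart p u w a (g a)) = 0"
    by (auto simp: chart_data_def)
  have gd: "(g has_field_derivative deriv g 0) (at 0)"
    using holomorphic_derivI[OF ghol] \<rho> by simp
  have d1: "((\<lambda>t. feval 4 C (chart p u w t (g t))) has_field_derivative
      dot (grad 4 C (chart p u w 0 (g 0))) (lin2 1 u (deriv g 0) w)) (at 0)"
    by (rule chart_deriv[OF _ gd]) (auto intro!: derivative_eq_intros)
  have "((\<lambda>t. feval 4 C (chart p u w t (g t))) has_field_derivative 0) (at 0)"
    by (rule has_field_derivative_transform_within_open[OF DERIV_const, of "ball 0 \<rho>"]) (use \<rho> on in auto)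
  with d1 show "dot (grad 4 C p) (lin2 1 u (deriv g 0) w) = 0"
    using DERIV_unique g0 by (fastforce simp: chart_00)
  have "dot w (cross p (lin2 1 u (deriv g 0) w)) \<noteq> 0"
    using D by (simp add: dot_cross_lin2 det3_cyc)
  then show "cross p (lin2 1 u (deriv g 0) w) \<noteq> zvec" by (auto simp: dot_def zvec_def)
qed

lemma zl_off:
  assumes cd: "chart_data C p u w r \<rho> g" and "dot l p \<noteq> 0"
  shows "zl p u w g l = 0"
  unfolding zl_def
proof (rule zorder_eq_0I[OF lin_analytic[OF cd]])
  have "g 0 = 0" using cd by (simp add: chart_data_def)
  then show "dot l (chart p u w 0 (g 0)) \<noteq> 0" using assms(2) by (simp add: chart_00)
qed

lemma zl_on:
  assumes cd: "chart_data C p u w r \<rho> g" and "dot l p = 0" and tr: "dot l (lin2 1 u (deriv g 0) w) \<noteq> 0"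
  shows "zl p u w g l = 1"
proof -
  from cd have \<rho>: "\<rho> > 0" and g0: "g 0 = 0" and ghol: "g holomorphic_on ball 0 \<rho>"
    by (auto simp: chart_data_def)
  have gd: "(g has_field_derivative deriv g 0) (at 0)"
    using holomorphic_derivI[OF ghol] \<rho> by simp
  have "((\<lambda>t. dot l (chart p u w t (g t))) has_field_derivative dot l (lin2 1 u (deriv g 0) w)) (at 0)"
    unfolding dot_def c1_chart c2_chart c3_chart lin2_def c123_simps
    by (auto intro!: derivative_eq_intros gd simp: algebra_simps)
  then have dd: "deriv (\<lambda>t. dot l (chart p u w t (g t))) 0 = dot l (lin2 1 u (deriv g 0) w)"
    by (rule DERIV_imp_deriv)
  show ?thesis unfolding zl_def
    by (rule zorder_zero_eqI'[OF lin_analytic[OF cd]]) (use assms(2) tr dd g0 in \<open>auto simp: chart_00\<close>)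
qed

lemma curve_ord_x:
  assumes cd: "chart_data C p u w r \<rho> g"
  shows "curve_ord 4 C 1 xform p = zl p u w g (1,0,0)"
proof -
  have fx: "feval 1 xform v = dot (1,0,0) v" for v unfolding xform_lform by (rule feval_lform)
  have ev: "eventually (\<lambda>t. feval 1 xform (chart p u w t (g t)) \<noteq> 0) (at 0)"
    unfolding fx using ev_lin_nonzero[OF cd, of "(1,0,0)"] by (simp add: zvec_def)
  show ?thesis unfolding curve_ord_eq[OF cd ev] zl_def fx ..
qed

lemma curve_ord_form3:
  assumes cd: "chart_data C p u w r \<rho> g" and a: "a \<noteq> zvec" and b: "b \<noteq> zvec" and c: "c \<noteq> zvec"
  shows "curve_ord 4 C 3 (form3 a b c) p = zl p u w g a + zl p u w g b + zl p u w g c"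
proof -
  define fa where "fa = (\<lambda>t. dot a (chart p u w t (g t)))"
  define fb where "fb = (\<lambda>t. dot b (chart p u w t (g t)))"
  define fc where "fc = (\<lambda>t. dot c (chart p u w t (g t)))"
  have ea: "eventually (\<lambda>t. fa t \<noteq> 0) (at 0)" unfolding fa_def by (rule ev_lin_nonzero[OF cd a])
  have eb: "eventually (\<lambda>t. fb t \<noteq> 0) (at 0)" unfolding fb_def by (rule ev_lin_nonzero[OF cd b])
  have ec: "eventually (\<lambda>t. fc t \<noteq> 0) (at 0)" unfolding fc_def by (rule ev_lin_nonzero[OF cd c])
  have aa: "fa analytic_on {0}" "fb analytic_on {0}" "fc analytic_on {0}"
    unfolding fa_def fb_def fc_def by (rule lin_analytic[OF cd])+
  have ev: "eventually (\<lambda>t. feval 3 (form3 a b c) (chart p u w t (g t)) \<noteq> 0) (at 0)"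
    using ea eb ec by eventually_elim (simp add: feval_form3 fa_def fb_def fc_def)
  have "curve_ord 4 C 3 (form3 a b c) p = zorder (\<lambda>t. fa t * (fb t * fc t)) 0"
    unfolding curve_ord_eq[OF cd ev] by (simp add: feval_form3 fa_def fb_def fc_def)
  also have "\<dots> = zorder fa 0 + zorder (\<lambda>t. fb t * fc t) 0"
  proof (rule zorder_times_analytic)
    show "fa analytic_on {0}" by (rule aa(1))
    show "(\<lambda>t. fb t * fc t) analytic_on {0}" using aa(2,3) by (rule analytic_on_mult)
    show "eventually (\<lambda>t. fa t * (fb t * fc t) \<noteq> 0) (at 0)" using ea eb ec by eventually_elim simp
  qed
  also have "zorder (\<lambda>t. fb t * fc t) 0 = zorder fb 0 + zorder fc 0"
  proof (rule zorder_times_analytic)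
    show "eventually (\<lambda>t. fb t * fc t \<noteq> 0) (at 0)" using eb ec by eventually_elim simp
  qed (use aa in auto)
  finally show ?thesis by (simp add: zl_def fa_def fb_def fc_def)
qed


lemma seven: "{1..7::nat} = {1,2,3,4,5,6,7}" by auto

lemma res_explicit: "res_pairs = {(1,3),(1,4),(1,5),(1,6),(2,4),(2,5),(2,6),(2,7),(3,5),(3,6),(3,7),(4,6),(4,7),(5,7)}"
proof (rule set_eqI)
  fix x :: "nat \<times> nat"
  obtain i j where x: "x = (i,j)" by (cases x) auto
  show "x \<in> res_pairs \<longleftrightarrow> x \<in> {(1,3),(1,4),(1,5),(1,6),(2,4),(2,5),(2,6),(2,7),(3,5),(3,6),(3,7),(4,6),(4,7),(5,7)}"
  proof
    assume "x \<in> res_pairs"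
    then have h: "1 \<le> i" "i < j" "j \<le> 7" "j - i \<noteq> 1" "j - i \<noteq> 6" by (auto simp: res_pairs_def x)
    then have "i = 1 \<or> i = 2 \<or> i = 3 \<or> i = 4 \<or> i = 5 \<or> i = 6" by linarith
    moreover have "j = 2 \<or> j = 3 \<or> j = 4 \<or> j = 5 \<or> j = 6 \<or> j = 7" using h by linarith
    ultimately show "x \<in> {(1,3),(1,4),(1,5),(1,6),(2,4),(2,5),(2,6),(2,7),(3,5),(3,6),(3,7),(4,6),(4,7),(5,7)}"
      using h unfolding x by (elim disjE) simp_all
  qed (auto simp: res_pairs_def x)
qed

definition nb :: "nat \<Rightarrow> nat \<Rightarrow> nat" where "nb k n = (k + 1 + n) mod 7 + 1"

lemma seven_cases: "k \<in> {1..7::nat} \<Longrightarrow> k = 1 \<or> k = 2 \<or> k = 3 \<or> k = 4 \<or> k = 5 \<or> k = 6 \<or> k = 7"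
  by auto
lemma four_cases: "n < (4::nat) \<Longrightarrow> n = 0 \<or> n = 1 \<or> n = 2 \<or> n = 3"
  by auto

lemma nb_props:
  assumes "k \<in> {1..7}" "n < 4"
  shows "nb k n \<in> {1..7}" "nb k n \<noteq> k" "(min k (nb k n), max k (nb k n)) \<in> res_pairs"
  using seven_cases[OF assms(1)] four_cases[OF assms(2)] unfolding res_explicit
  by (elim disjE; simp add: nb_def)+

lemma nb_inj: "k \<in> {1..7} \<Longrightarrow> n < 4 \<Longrightarrow> m < 4 \<Longrightarrow> nb k n = nb k m \<Longrightarrow> n = m"
  by (drule seven_cases, drule four_cases, drule four_cases) (elim disjE; simp add: nb_def)

lemma res_props: "(i,j) \<in> res_pairs \<Longrightarrow> i \<in> {1..7} \<and> j \<in> {1..7} \<and> i \<noteq> j"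
  by (auto simp: res_pairs_def)

lemma Zcases:
  fixes z :: "nat \<Rightarrow> bool"
  assumes H1: "\<And>i j k. i \<in> {1..7} \<Longrightarrow> j \<in> {1..7} \<Longrightarrow> k \<in> {1..7} \<Longrightarrow> i \<noteq> j \<Longrightarrow> j \<noteq> k \<Longrightarrow> i \<noteq> k
      \<Longrightarrow> \<not> (z i \<and> z j \<and> z k)"
    and H2: "\<And>k. k \<in> {1..7} \<Longrightarrow> z k \<Longrightarrow> \<exists>n<4. z (nb k n)"
  shows "(\<forall>k\<in>{1..7}. \<not> z k) \<or> (\<exists>i j. (i,j) \<in> res_pairs \<and> (\<forall>k\<in>{1..7}. z k \<longleftrightarrow> k = i \<or> k = j))"
proof (cases "\<exists>k\<in>{1..7}. z k")
  case True
  then obtain k where k: "k \<in> {1..7}" "z k" by blast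
  obtain n where n: "n < 4" "z (nb k n)" using H2[OF k] by blast
  define j where "j = nb k n"
  have j: "j \<in> {1..7}" "j \<noteq> k" "(min k j, max k j) \<in> res_pairs" "z j"
    using nb_props[OF k(1) n(1)] n by (simp_all add: j_def)
  have "\<forall>m\<in>{1..7}. z m \<longleftrightarrow> m = min k j \<or> m = max k j"
  proof
    fix m :: nat assume m: "m \<in> {1..7}"
    show "z m \<longleftrightarrow> m = min k j \<or> m = max k j"
    proof
      assume zm: "z m"
      show "m = min k j \<or> m = max k j"
      proof (rule ccontr)
        assume "\<not> ?thesis"
        then have "m \<noteq> k" "m \<noteq> j" by (auto simp: min_def max_def split: if_splits)
        with H1[OF k(1) j(1) m] k j zm show False by auto
      qed
    next
      assume "m = min k j \<or> m = max k j"
      then show "z m" using k j by (auto simp: min_def max_def)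
    qed
  qed
  with j(3) show ?thesis by blast
qed auto

lemma sum_res_pair:
  assumes ij: "(i,j) \<in> res_pairs"
  shows "(\<Sum>xy\<in>res_pairs. (if (fst xy = i \<or> fst xy = j) \<and> (snd xy = i \<or> snd xy = j) then 1 else 0)) = (1::int)"
proof -
  have "(\<Sum>xy\<in>res_pairs. (if (fst xy = i \<or> fst xy = j) \<and> (snd xy = i \<or> snd xy = j) then 1 else 0))
      = (\<Sum>xy\<in>res_pairs. (if xy = (i,j) then 1 else (0::int)))"
  proof (rule sum.cong[OF refl])
    fix xy assume xy: "xy \<in> res_pairs"
    obtain x y where e: "xy = (x,y)" by (cases xy) auto
    have "x < y" "i < j" using xy ij by (auto simp: res_pairs_def e)
    then show "(if (fst xy = i \<or> fst xy = j) \<and> (snd xy = i \<or> snd xy = j) then 1 else 0) = (if xy = (i,j) then 1 else (0::int))"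
      by (auto simp: e)
  qed
  also have "\<dots> = 1"
  proof -
    have fin: "finite res_pairs" by (simp add: res_explicit)
    show ?thesis using ij by (simp add: sum.delta[OF fin])
  qed
  finally show ?thesis .
qed


lemma dot_cross_self2: "dot y (cross x y) = 0"
  by (simp add: dot_def cross_def algebra_simps)

lemma cross_cross: "cross (cross a b) (cross a c) = smul (det3 a b c) a"
  by (simp add: cross_def det3_def dot_def smul_def algebra_simps)

lemma cross_swap: "cross b a = smul (-1) (cross a b)"
  by (simp add: cross_def smul_def algebra_simps)

locale hept =
  fixes L :: "nat \<Rightarrow> cvec" and C :: form
  assumes H: "heptagon L" and A: "adjoint_quartic L C" and S: "smooth_curve 4 C"
begin

lemma Lnz: "i \<in> {1..7} \<Longrightarrow> L i \<noteq> zvec"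
  using H by (simp add: heptagon_def)

lemma Lcross: "i \<in> {1..7} \<Longrightarrow> j \<in> {1..7} \<Longrightarrow> i \<noteq> j \<Longrightarrow> cross (L i) (L j) \<noteq> zvec"
  using H by (simp add: heptagon_def)

lemma Ldet: "i \<in> {1..7} \<Longrightarrow> j \<in> {1..7} \<Longrightarrow> k \<in> {1..7} \<Longrightarrow> i \<noteq> j \<Longrightarrow> j \<noteq> k \<Longrightarrow> i \<noteq> k
   \<Longrightarrow> det3 (L i) (L j) (L k) \<noteq> 0"
  using H by (simp add: heptagon_def)

lemma on_res: "(i,j) \<in> res_pairs \<Longrightarrow> feval 4 C (cross (L i) (L j)) = 0"
  using A by (auto simp: adjoint_quartic_def pt_def)

lemma on_curve:
  assumes "(min i j, max i j) \<in> res_pairs"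
  shows "feval 4 C (cross (L i) (L j)) = 0"
proof (cases "i \<le> j")
  case True then show ?thesis using on_res[of i j] assms by (simp add: min_def max_def)
next
  case False
  then have "feval 4 C (cross (L j) (L i)) = 0" using on_res[of j i] assms by (simp add: min_def max_def)
  then show ?thesis by (simp add: cross_swap[of "L i"] feval_smul)
qed

definition q :: "nat \<Rightarrow> nat \<Rightarrow> cvec" where "q k n = cross (L k) (L (nb k n))"

lemma q_props:
  assumes k: "k \<in> {1..7}"
  shows "\<And>n. n < 4 \<Longrightarrow> q k n \<noteq> zvec \<and> feval 4 C (q k n) = 0 \<and> dot (L k) (q k n) = 0"
    and "\<And>n m. n < 4 \<Longrightarrow> m < 4 \<Longrightarrow> n \<noteq> m \<Longrightarrow> cross (q k n) (q k m) \<noteq> zvec"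
proof -
  fix n :: nat assume n: "n < 4"
  show "q k n \<noteq> zvec \<and> feval 4 C (q k n) = 0 \<and> dot (L k) (q k n) = 0"
    using nb_props[OF k n] Lcross[OF k] on_curve[of k "nb k n"] by (auto simp: q_def dot_cross_self)
next
  fix n m :: nat assume n: "n < 4" and m: "m < 4" and nm: "n \<noteq> m"
  have "nb k n \<noteq> nb k m" using nb_inj[OF k n m] nm by auto
  then have "det3 (L k) (L (nb k n)) (L (nb k m)) \<noteq> 0"
    using nb_props[OF k n] nb_props[OF k m] by (intro Ldet[OF k]) auto
  then show "cross (q k n) (q k m) \<noteq> zvec"
    using Lnz[OF k] by (simp add: q_def cross_cross smul_zvec_iff)
qed

lemma line_nbr:
  assumes k: "k \<in> {1..7}" and v: "v \<noteq> zvec" "feval 4 C v = 0" "dot (L k) v = 0"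
  shows "\<exists>n<4. dot (L (nb k n)) v = 0"
proof -
  obtain n where n: "n < 4" "cross (q k n) v = zvec"
    using line_points[OF S Lnz[OF k], of "q k", OF q_props(1)[OF k] q_props(2)[OF k] v] by blast
  obtain c where "v = smul c (q k n)" using cross_zero_smul n q_props(1)[OF k n(1)] by blast
  then have "dot (L (nb k n)) v = 0" by (simp add: dot_smul q_def dot_cross_self2)
  with n show ?thesis by blast
qed

lemma transv:
  assumes k: "k \<in> {1..7}" and cd: "chart_data C v u w r \<rho> g" and vk: "dot (L k) v = 0"
  shows "dot (L k) (lin2 1 u (deriv g 0) w) \<noteq> 0"
proof -
  from cd have v: "v \<noteq> zvec" "feval 4 C v = 0" by (auto simp: chart_data_def)
  show ?thesis
    by (rule line_transversal[OF S Lnz[OF k], of "q k", OF q_props(1)[OF k] q_props(2)[OF k] v vk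
          gamma0_tangent[OF cd]])
qed

lemma zl_L:
  assumes k: "k \<in> {1..7}" and cd: "chart_data C v u w r \<rho> g"
  shows "zl v u w g (L k) = (if dot (L k) v = 0 then 1 else 0)"
  using zl_on[OF cd _ transv[OF k cd]] zl_off[OF cd] by auto

lemma three_not:
  assumes "i \<in> {1..7}" "j \<in> {1..7}" "k \<in> {1..7}" "i \<noteq> j" "j \<noteq> k" "i \<noteq> k" "v \<noteq> zvec"
  shows "\<not> (dot (L i) v = 0 \<and> dot (L j) v = 0 \<and> dot (L k) v = 0)"
proof
  assume h: "dot (L i) v = 0 \<and> dot (L j) v = 0 \<and> dot (L k) v = 0"
  have "det3 (L i) (L j) (L k) = 0"
    by (rule det3_perp[OF assms(7)]) (use h in \<open>auto simp: dot_comm\<close>)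
  with Ldet[OF assms(1-6)] show False by simp
qed

lemma pt_div_res:
  assumes ij: "(i,j) \<in> res_pairs"
  shows "pt_div (pt L i j) v = (if v \<noteq> zvec \<and> dot (L i) v = 0 \<and> dot (L j) v = 0 then 1 else 0)"
proof -
  have ij': "i \<in> {1..7}" "j \<in> {1..7}" "i \<noteq> j" using res_props[OF ij] by auto
  have nz: "cross (L i) (L j) \<noteq> zvec" by (rule Lcross[OF ij'])
  have "proj_eq (cross (L i) (L j)) v \<longleftrightarrow> v \<noteq> zvec \<and> dot (L i) v = 0 \<and> dot (L j) v = 0"
  proof
    assume "proj_eq (cross (L i) (L j)) v"
    then obtain c where "v = smul c (cross (L i) (L j))" "v \<noteq> zvec" unfolding proj_eq_def by blast
    then show "v \<noteq> zvec \<and> dot (L i) v = 0 \<and> dot (L j) v = 0"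
      by (simp add: dot_smul dot_cross_self dot_cross_self2)
  next
    assume h: "v \<noteq> zvec \<and> dot (L i) v = 0 \<and> dot (L j) v = 0"
    then obtain c where "v = smul c (cross (L i) (L j))"
      using perp2[OF nz, of v] by (auto simp: dot_comm)
    with h nz show "proj_eq (cross (L i) (L j)) v" unfolding proj_eq_def by blast
  qed
  then show ?thesis by (simp add: pt_div_def pt_def)
qed

lemma pt_div_off:
  assumes ij: "(i,j) \<in> res_pairs" and nv: "\<not> (v \<noteq> zvec \<and> feval 4 C v = 0)"
  shows "pt_div (pt L i j) v = 0"
proof -
  have ij': "i \<in> {1..7}" "j \<in> {1..7}" "i \<noteq> j" using res_props[OF ij] by auto
  have "\<not> (v \<noteq> zvec \<and> dot (L i) v = 0 \<and> dot (L j) v = 0)"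
  proof
    assume h: "v \<noteq> zvec \<and> dot (L i) v = 0 \<and> dot (L j) v = 0"
    then obtain c where "v = smul c (cross (L i) (L j))"
      using perp2[OF Lcross[OF ij'], of v] by (auto simp: dot_comm)
    then have "feval 4 C v = 0" using on_res[OF ij] by (simp add: feval_smul)
    with h nv show False by simp
  qed
  then show ?thesis by (simp add: pt_div_res[OF ij])
qed

end


context hept
begin

lemma pd_res:
  assumes "x \<in> res_pairs"
  shows "pt_div (pt L (fst x) (snd x)) v = (if v \<noteq> zvec \<and> dot (L (fst x)) v = 0 \<and> dot (L (snd x)) v = 0 then 1 else 0)"
  using pt_div_res[of "fst x" "snd x" v] assms by simp

lemma pd_off:
  assumes "x \<in> res_pairs" "\<not> (v \<noteq> zvec \<and> feval 4 C v = 0)"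
  shows "pt_div (pt L (fst x) (snd x)) v = 0"
  using pt_div_off[of "fst x" "snd x" v] assms by simp

lemma res_fin: "finite res_pairs" by (simp add: res_explicit)

lemma rel_generic:
  assumes ra: "a \<in> res_pairs" "b \<in> res_pairs" "c \<in> res_pairs" "e \<in> res_pairs"
    and t: "t1 \<in> {1..7}" "t2 \<in> {1..7}" "t3 \<in> {1..7}"
    and comb: "\<And>i j. (i,j) \<in> res_pairs \<Longrightarrow>
      1 + (if a = (i,j) then 1 else 0) - (if b = (i,j) then 1 else 0) - (if c = (i,j) then 1 else 0)
        - (if e = (i,j) then 1 else 0)
      = (if t1 = i \<or> t1 = j then 1 else 0) + (if t2 = i \<or> t2 = j then 1 else 0) + (if t3 = i \<or> t3 = j then (1::int) else 0)"
  shows "eta_rel L C a b c e"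
proof -
  define xv where "xv = ((1::complex), (0::complex), (0::complex))"
  have xv: "xv \<noteq> zvec" by (simp add: xv_def zvec_def)
  define G where "G = form3 (L t1) (L t2) (L t3)"
  define H where "H = form3 xv xv xv"
  have Lt: "L t1 \<noteq> zvec" "L t2 \<noteq> zvec" "L t3 \<noteq> zvec" using Lnz t by auto
  let ?pd = "\<lambda>x v. pt_div (pt L (fst x) (snd x)) v"
  have main: "(eta L C v + ?pd a v - ?pd b v) - (?pd c v + ?pd e v) = divC 4 C 3 G v - divC 4 C 3 H v" for v
  proof (cases "v \<noteq> zvec \<and> feval 4 C v = 0")
    case False
    have s: "(\<Sum>(i,j)\<in>res_pairs. pt_div (pt L i j) v) = 0"
      by (rule sum.neutral) (use pt_div_off[OF _ False] in auto)
    have "eta L C v = 0"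
      unfolding eta_def s using False by (auto simp: divC_def)
    moreover have "?pd x v = 0" if "x \<in> res_pairs" for x using pd_off[OF that False] .
    ultimately show ?thesis using False ra by (auto simp: divC_def)
  next
    case True
    then obtain u w r \<rho> g where cd: "chart_data C v u w r \<rho> g" using chart_data_exists[OF S] by blast
    define z where "z = (\<lambda>k. dot (L k) v = 0)"
    define ind where "ind = (\<lambda>P. if P then 1 else (0::int))"
    have zlL: "zl v u w g (L k) = ind (z k)" if "k \<in> {1..7}" for k
      using zl_L[OF that cd] by (simp add: ind_def z_def)
    have dG: "divC 4 C 3 G v = ind (z t1) + ind (z t2) + ind (z t3)"
      using True curve_ord_form3[OF cd Lt] zlL t by (simp add: divC_def G_def)
    have dH: "divC 4 C 3 H v = 3 * zl v u w g xv"
      using True curve_ord_form3[OF cd xv xv xv] by (simp add: divC_def H_def)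
    have dx: "divC 4 C 1 xform v = zl v u w g xv"
      using True curve_ord_x[OF cd] by (simp add: divC_def xv_def)
    have pd: "?pd x v = ind (z (fst x) \<and> z (snd x))" if "x \<in> res_pairs" for x
      using pd_res[OF that, of v] True by (simp add: ind_def z_def)
    have eta: "eta L C v = (\<Sum>x\<in>res_pairs. ind (z (fst x) \<and> z (snd x))) - 3 * zl v u w g xv"
      unfolding eta_def dx using pd by (simp add: case_prod_unfold)
    have Z: "(\<forall>k\<in>{1..7}. \<not> z k) \<or> (\<exists>i j. (i,j) \<in> res_pairs \<and> (\<forall>k\<in>{1..7}. z k \<longleftrightarrow> k = i \<or> k = j))"
    proof (rule Zcases)
      show "\<not> (z i \<and> z j \<and> z k)" if "i \<in> {1..7}" "j \<in> {1..7}" "k \<in> {1..7}" "i \<noteq> j" "j \<noteq> k" "i \<noteq> k" for i j k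
        using three_not[OF that] True by (simp add: z_def)
      show "\<exists>n<4. z (nb k n)" if "k \<in> {1..7}" "z k" for k
        using line_nbr[OF that(1)] True that(2) by (simp add: z_def)
    qed
    have rp: "fst x \<in> {1..7} \<and> snd x \<in> {1..7} \<and> fst x < snd x" if "x \<in> res_pairs" for x
      using that by (auto simp: res_pairs_def)
    from Z show ?thesis
    proof
      assume none: "\<forall>k\<in>{1..7}. \<not> z k"
      have s0: "(\<Sum>x\<in>res_pairs. ind (z (fst x) \<and> z (snd x))) = 0"
        by (rule sum.neutral) (use none rp in \<open>auto simp: ind_def\<close>)
      have p0: "ind (z (fst x) \<and> z (snd x)) = 0" if "x \<in> res_pairs" for x
        using none rp[OF that] by (auto simp: ind_def)
      show ?thesis unfolding eta s0 dG dH using pd p0 ra none t by (simp add: ind_def)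
    next
      assume "\<exists>i j. (i,j) \<in> res_pairs \<and> (\<forall>k\<in>{1..7}. z k \<longleftrightarrow> k = i \<or> k = j)"
      then obtain i j where ij: "(i,j) \<in> res_pairs" and zk: "\<And>k. k \<in> {1..7} \<Longrightarrow> z k \<longleftrightarrow> k = i \<or> k = j" by blast
      have ijl: "i < j" using ij by (simp add: res_pairs_def)
      have zp: "ind (z (fst x) \<and> z (snd x)) = ind ((fst x = i \<or> fst x = j) \<and> (snd x = i \<or> snd x = j))"
        if "x \<in> res_pairs" for x using zk rp[OF that] by simp
      have s1: "(\<Sum>x\<in>res_pairs. ind (z (fst x) \<and> z (snd x))) = 1"
        using sum_res_pair[OF ij] zp by (simp add: ind_def cong: sum.cong)
      have pe: "ind (z (fst x) \<and> z (snd x)) = ind (x = (i,j))" if "x \<in> res_pairs" for x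
      proof -
        have "(fst x = i \<or> fst x = j) \<and> (snd x = i \<or> snd x = j) \<longleftrightarrow> x = (i,j)"
          using rp[OF that] ijl by (cases x) auto
        then show ?thesis using zp[OF that] by simp
      qed
      have tt: "ind (z t) = ind (t = i \<or> t = j)" if "t \<in> {1..7}" for t using zk[OF that] by simp
      show ?thesis unfolding eta s1 dG dH using pd pe ra tt t comb[OF ij] by (simp add: ind_def)
    qed
  qed
  obtain p0 where p0: "p0 = cross (L 1) (L 3)" by blast
  have p0X: "p0 \<noteq> zvec" "feval 4 C p0 = 0"
    using Lcross[of 1 3] on_res[of 1 3] by (auto simp: p0 res_explicit)
  obtain u w r \<rho> g where cd: "chart_data C p0 u w r \<rho> g" using chart_data_exists[OF S p0X] by blast
  have \<rho>: "\<rho> > 0" and D: "det3 p0 u w \<noteq> 0"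
    and on: "\<And>a. a \<in> cball 0 \<rho> \<Longrightarrow> feval 4 C (chart p0 u w a (g a)) = 0" using cd by (auto simp: chart_data_def)
  have "eventually (\<lambda>s. s \<in> ball 0 \<rho> \<and> dot (L t1) (chart p0 u w s (g s)) \<noteq> 0 \<and> dot (L t2) (chart p0 u w s (g s)) \<noteq> 0
      \<and> dot (L t3) (chart p0 u w s (g s)) \<noteq> 0 \<and> dot xv (chart p0 u w s (g s)) \<noteq> 0) (at 0)"
    using eventually_ball_at[OF \<rho>] ev_lin_nonzero[OF cd Lt(1)] ev_lin_nonzero[OF cd Lt(2)]
      ev_lin_nonzero[OF cd Lt(3)] ev_lin_nonzero[OF cd xv] by eventually_elim auto
  then obtain s where s: "s \<in> ball 0 \<rho>" "dot (L t1) (chart p0 u w s (g s)) \<noteq> 0" "dot (L t2) (chart p0 u w s (g s)) \<noteq> 0"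
      "dot (L t3) (chart p0 u w s (g s)) \<noteq> 0" "dot xv (chart p0 u w s (g s)) \<noteq> 0"
    using eventually_happens[of _ "at (0::complex)"] by (auto simp: trivial_limit_at)
  define v0 where "v0 = chart p0 u w s (g s)"
  have v0: "v0 \<noteq> zvec" "feval 4 C v0 = 0" using chart_nonzero[OF D] on s(1) by (auto simp: v0_def)
  have G0: "feval 3 G v0 \<noteq> 0" using s by (simp add: G_def feval_form3 v0_def)
  have H0: "feval 3 H v0 \<noteq> 0" using s by (simp add: H_def feval_form3 v0_def)
  have ex1: "\<exists>v. v \<noteq> zvec \<and> feval 4 C v = 0 \<and> feval 3 G v \<noteq> 0" using v0 G0 by blast
  have ex2: "\<exists>v. v \<noteq> zvec \<and> feval 4 C v = 0 \<and> feval 3 H v \<noteq> 0" using v0 H0 by blast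
  have hG: "hom_form 3 G" "hom_form 3 H" by (simp_all add: G_def H_def hom_form3)
  show ?thesis unfolding eta_rel_def lin_equiv_def
    by (rule exI[of _ 3], rule exI[of _ G], rule exI[of _ H]) (use hG ex1 ex2 main in blast)
qed

end


theorem lemma3p1:
  fixes L :: "nat \<Rightarrow> cvec" and C :: form
  assumes "heptagon L" and "adjoint_quartic L C" and "smooth_curve 4 C"
  shows "eta_rel L C (1,3) (4,6) (4,7) (5,7) \<and> eta_rel L C (4,6) (1,3) (3,7) (2,7) \<and>
         eta_rel L C (4,6) (2,7) (3,7) (1,3) \<and> eta_rel L C (2,7) (4,6) (3,6) (3,5) \<and>
         eta_rel L C (2,7) (3,5) (3,6) (4,6) \<and> eta_rel L C (3,5) (2,7) (2,6) (1,6) \<and>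
         eta_rel L C (3,5) (1,6) (2,6) (2,7) \<and> eta_rel L C (1,6) (3,5) (2,5) (2,4) \<and>
         eta_rel L C (1,6) (2,4) (2,5) (3,5) \<and> eta_rel L C (2,4) (1,6) (1,5) (5,7) \<and>
         eta_rel L C (2,4) (5,7) (1,5) (1,6) \<and> eta_rel L C (5,7) (2,4) (1,4) (1,3) \<and>
         eta_rel L C (5,7) (1,3) (1,4) (2,4) \<and> eta_rel L C (1,3) (5,7) (4,7) (4,6)"
proof -
  interpret hept L C using assms by unfold_locales
  have r0: "eta_rel L C (1,3) (4,6) (4,7) (5,7)"
    by (rule rel_generic[of _ _ _ _ 1 2 3]) (auto simp: res_explicit)
  have r1: "eta_rel L C (4,6) (1,3) (3,7) (2,7)"
    by (rule rel_generic[of _ _ _ _ 4 5 6]) (auto simp: res_explicit)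
  have r2: "eta_rel L C (4,6) (2,7) (3,7) (1,3)"
    by (rule rel_generic[of _ _ _ _ 4 5 6]) (auto simp: res_explicit)
  have r3: "eta_rel L C (2,7) (4,6) (3,6) (3,5)"
    by (rule rel_generic[of _ _ _ _ 1 2 7]) (auto simp: res_explicit)
  have r4: "eta_rel L C (2,7) (3,5) (3,6) (4,6)"
    by (rule rel_generic[of _ _ _ _ 1 2 7]) (auto simp: res_explicit)
  have r5: "eta_rel L C (3,5) (2,7) (2,6) (1,6)"
    by (rule rel_generic[of _ _ _ _ 3 4 5]) (auto simp: res_explicit)
  have r6: "eta_rel L C (3,5) (1,6) (2,6) (2,7)"
    by (rule rel_generic[of _ _ _ _ 3 4 5]) (auto simp: res_explicit)
  have r7: "eta_rel L C (1,6) (3,5) (2,5) (2,4)"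
    by (rule rel_generic[of _ _ _ _ 1 6 7]) (auto simp: res_explicit)
  have r8: "eta_rel L C (1,6) (2,4) (2,5) (3,5)"
    by (rule rel_generic[of _ _ _ _ 1 6 7]) (auto simp: res_explicit)
  have r9: "eta_rel L C (2,4) (1,6) (1,5) (5,7)"
    by (rule rel_generic[of _ _ _ _ 2 3 4]) (auto simp: res_explicit)
  have r10: "eta_rel L C (2,4) (5,7) (1,5) (1,6)"
    by (rule rel_generic[of _ _ _ _ 2 3 4]) (auto simp: res_explicit)
  have r11: "eta_rel L C (5,7) (2,4) (1,4) (1,3)"
    by (rule rel_generic[of _ _ _ _ 5 6 7]) (auto simp: res_explicit)
  have r12: "eta_rel L C (5,7) (1,3) (1,4) (2,4)"
    by (rule rel_generic[of _ _ _ _ 5 6 7]) (auto simp: res_explicit)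
  have r13: "eta_rel L C (1,3) (5,7) (4,7) (4,6)"
    by (rule rel_generic[of _ _ _ _ 1 2 3]) (auto simp: res_explicit)
  show ?thesis using r0 r1 r2 r3 r4 r5 r6 r7 r8 r9 r10 r11 r12 r13 by blast
qed


end
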